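(* Consider the LTI MIMO state-space model $$\alpha_{k+1}=T\alpha_k+Bx_k+\eta_k,\qquad y_k=Z\alpha_k+\beta x_k+\varepsilon_k,\qquad \begin{bmatrix}\eta_k\\ \varepsilon_k\end{bmatrix}\sim\mathcal N\!\left(0,\begin{bmatrix}Q&S\\ S^\top&H\end{bmatrix}\right),$$ $\alpha_0\sim\mathcal N(\bar\alpha_0,\Pi_0)$, $\Pi_0>0$, $H>0$, where the quantities $T,B,Z,\beta,Q,S,H,\bar\alpha_0,\Pi_0$ depend differentiably on a parameter vector $\theta\in\mathbb R^p$, while the observations $y_k$ and explanatory variables $x_k$ do not depend on $\theta$. For a matrix-valued function $A(\theta)$ write $\partial_iA:=\partial A/\partial\theta_i$. Let $\overline T=T-SH^{-1}Z$, $\overline B=B-SH^{-1}\beta$, $\overline Q=Q-SH^{-1}S^\top$. Algorithm 1a (UD-based LTI MIMO KF): factor $\Pi_0=\bar U_{\Pi_0}D_{\Pi_0}\bar U_{\Pi_0}^\top$, $H=\bar U_HD_H\bar U_H^\top$, $\overline Q=\bar U_{\overline Q}D_{\overline Q}\bar U_{\overline Q}^\top$; set $\hat\alpha_{0|0}=\bar\alpha_0$, $\bar U_{P_{0|0}}=\bar U_{\Pi_0}$, $D_{P_{0|0}}=D_{\Pi_0}$; for $k=1,\dots,N$: $\hat\alpha_{k|k-1}=\overline T\hat\alpha_{k-1|k-1}+\overline Bx_{k-1}+SH^{-1}y_{k-1}$; MWGS on $\mathbb A^\top=[\overline T\bar U_{P_{k-1|k-1}}\ \bar U_{\overline Q}]$,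 $\mathbb D_A=D_{P_{k-1|k-1}}\oplus D_{\overline Q}$ gives $\mathbb R=\bar U_{P_{k|k-1}}$, $\mathbb D_R=D_{P_{k|k-1}}$ (time update); MWGS on $\mathbb A^\top=\begin{bmatrix}\bar U_{P_{k|k-1}}&0\\ Z\bar U_{P_{k|k-1}}&\bar U_H\end{bmatrix}$, $\mathbb D_A=D_{P_{k|k-1}}\oplus D_H$ gives $\mathbb R=\begin{bmatrix}\bar U_{P_{k|k}}&\bar K_k^u\\0&\bar U_{R_{e,k}}\end{bmatrix}$, $\mathbb D_R=D_{P_{k|k}}\oplus D_{R_{e,k}}$ (measurement update); $e_k=y_k-Z\hat\alpha_{k|k-1}-\beta x_k$, $\bar e_k=\bar U_{R_{e,k}}^{-1}e_k$, $\hat\alpha_{k|k}=\hat\alpha_{k|k-1}+\bar K_k^u\bar e_k$. Algorithm 1b (differentiated UD-based LTI MIMO KF): for each $i=1,\dots,p$, in addition to running Algorithm 1a, it initializes with $\partial_i\bar U_{P_{0|0}}=\partial_i\bar U_{\Pi_0}$, $\partial_iD_{P_{0|0}}=\partial_iD_{\Pi_0}$, $\partial_i\hat\alpha_{0|0}=\partial_i\bar\alpha_0$ (using $\partial_i\overline T,\partial_i\overline B,\partial_i\overline Q$ and the derivatives of the factors of $\overline Q$ and $H$), and for $k=1,\dots,N$ computes: (a) $\partial_i\hat\alpha_{k|k-1}=(\partial_i\overline T)\hat\alpha_{k-1|k-1}+\overline T\,\partial_i\hat\alpha_{k-1|k-1}+(\partial_i\overline B)x_{k-1}+(\partial_iS)H^{-1}y_{k-1}-SH^{-1}(\partial_iH)H^{-1}y_{k-1}$;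 (b) in both the time and the measurement update, forms the pre-arrays $\mathbb A,\mathbb D_A$ of Algorithm 1a and their derivatives $\partial_i\mathbb A,\partial_i\mathbb D_A$, applies the Diff. UD scheme below to obtain $\mathbb R,\mathbb D_R,\partial_i\mathbb R,\partial_i\mathbb D_R$, and reads off the blocks $\partial_i\bar U_{P_{k|k-1}},\partial_iD_{P_{k|k-1}},\partial_i\bar U_{P_{k|k}},\partial_iD_{P_{k|k}},\partial_i\bar U_{R_{e,k}},\partial_iD_{R_{e,k}},\partial_i\bar K_k^u$ from the same positions as the corresponding undifferentiated blocks; (c) $\partial_i\bar e_k=-\bar U_{R_{e,k}}^{-1}(\partial_i\bar U_{R_{e,k}})\bar U_{R_{e,k}}^{-1}e_k-\bar U_{R_{e,k}}^{-1}\big[(\partial_iZ)\hat\alpha_{k|k-1}+Z\,\partial_i\hat\alpha_{k|k-1}+(\partial_i\beta)x_k\big]$; (d) $\partial_i\hat\alpha_{k|k}=\partial_i\hat\alpha_{k|k-1}+(\partial_i\bar K_k^u)\bar e_k+\bar K_k^u\,\partial_i\bar e_k$. Diff. UD scheme with inputs $\mathbb A,\mathbb D_A,\partial_i\mathbb A,\partial_i\mathbb D_A$: apply MWGS to obtain $\mathfrak W,\mathbb R,\mathbb D_R$; set $M_0=\mathfrak W^\top\mathbb D_A(\partial_i\mathbb A)\mathbb R^{-\top}$ and split $M_0=\bar L_0+D_0+\bar U_0$ into strictly lower triangular, diagonal and strictly upper triangular parts; set $M_2=\mathfrak W^\top(\partial_i\mathbb D_A)\mathfrak W$ and split $M_2=\bar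 L_2+D_2+\bar U_2$ likewise; output $\partial_i\mathbb R=\mathbb R(\bar L_0^\top+\bar U_0+\bar U_2)\mathbb D_R^{-1}$ and $\partial_i\mathbb D_R=2D_0+D_2$. Then Algorithm 1b computes the filter sensitivities of Algorithm 1a correctly: for every $k$ and $i$, the quantities it produces as $\partial_i\hat\alpha_{k|k-1}$, $\partial_i\bar U_{P_{k|k-1}}$, $\partial_iD_{P_{k|k-1}}$, $\partial_i\bar U_{P_{k|k}}$, $\partial_iD_{P_{k|k}}$, $\partial_i\bar U_{R_{e,k}}$, $\partial_iD_{R_{e,k}}$, $\partial_i\bar K_k^u$, $\partial_i\bar e_k$, $\partial_i\hat\alpha_{k|k}$ equal the partial derivatives with respect to $\theta_i$ of the corresponding quantities computed by Algorithm 1a, regarded as functions of $\theta$.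
   Context: $UDU^\top$ factorization: $P=\bar U_PD_P\bar U_P^\top$ with $\bar U_P$ unit upper triangular and $D_P$ diagonal. $A\oplus B:=\mathrm{diag}\{A,B\}$. MWGS: given $\mathbb A\in\mathbb R^{r\times s}$ ($r\ge s$) and diagonal $\mathbb D_A>0$, it returns the matrix $\mathfrak W\in\mathbb R^{r\times s}$, a unit upper triangular $\mathbb R\in\mathbb R^{s\times s}$ and a diagonal $\mathbb D_R\in\mathbb R^{s\times s}$ with $\mathbb A^\top=\mathbb R\mathfrak W^\top$ and $\mathfrak W^\top\mathbb D_A\mathfrak W=\mathbb D_R$. It is assumed that every MWGS call is well defined (pre-arrays as required, with $\mathbb D_R$ invertible) and that all quantities involved are differentiable in $\theta$. *)

theory Defs
  imports "Jordan_Normal_Form.Gauss_Jordan_Elimination" "HOL-Analysis.Euclidean_Space"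
begin

definition minv :: "real mat \<Rightarrow> real mat" where
  "minv A = (case mat_inverse A of Some B \<Rightarrow> B | None \<Rightarrow> 0\<^sub>m (dim_row A) (dim_col A))"

definition dsum :: "real mat \<Rightarrow> real mat \<Rightarrow> real mat" where
  "dsum A B = four_block_mat A (0\<^sub>m (dim_row A) (dim_col B)) (0\<^sub>m (dim_row B) (dim_col A)) B"

definition hcat :: "real mat \<Rightarrow> real mat \<Rightarrow> real mat" where
  "hcat A B = mat (dim_row A) (dim_col A + dim_col B)
     (\<lambda>(i,j). if j < dim_col A then A $$ (i,j) else B $$ (i, j - dim_col A))"

definition blk :: "real mat \<Rightarrow> nat \<Rightarrow> nat \<Rightarrow> nat \<Rightarrow> nat \<Rightarrow> real mat" where
  "blk M r0 c0 nr nc = mat nr nc (\<lambda>(i,j). M $$ (r0 + i, c0 + j))"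

definition strict_lower :: "real mat \<Rightarrow> real mat" where
  "strict_lower M = mat (dim_row M) (dim_col M) (\<lambda>(i,j). if j < i then M $$ (i,j) else 0)"

definition diag_part :: "real mat \<Rightarrow> real mat" where
  "diag_part M = mat (dim_row M) (dim_col M) (\<lambda>(i,j). if i = j then M $$ (i,j) else 0)"

definition strict_upper :: "real mat \<Rightarrow> real mat" where
  "strict_upper M = mat (dim_row M) (dim_col M) (\<lambda>(i,j). if i < j then M $$ (i,j) else 0)"

definition unit_upper_triangular :: "real mat \<Rightarrow> bool" where
  "unit_upper_triangular U \<longleftrightarrow> square_mat U \<and> upper_triangular U \<and> (\<forall>i<dim_row U. U $$ (i,i) = 1)"

definition pos_def_mat :: "real mat \<Rightarrow> bool" where
  "pos_def_mat M \<longleftrightarrow> square_mat M \<and> M = transpose_mat M \<and>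
     (\<forall>v\<in>carrier_vec (dim_row M). v \<noteq> 0\<^sub>v (dim_row M) \<longrightarrow> scalar_prod v (M *\<^sub>v v) > 0)"

definition pos_semidef_mat :: "real mat \<Rightarrow> bool" where
  "pos_semidef_mat M \<longleftrightarrow> square_mat M \<and> M = transpose_mat M \<and>
     (\<forall>v\<in>carrier_vec (dim_row M). scalar_prod v (M *\<^sub>v v) \<ge> 0)"

definition udu :: "real mat \<Rightarrow> real mat \<Rightarrow> real mat \<Rightarrow> bool" where
  "udu P U D \<longleftrightarrow> (\<exists>n. P \<in> carrier_mat n n \<and> U \<in> carrier_mat n n \<and> D \<in> carrier_mat n n)
     \<and> unit_upper_triangular U \<and> diagonal_mat D \<and> P = U * D * transpose_mat U"

definition mwgs :: "real mat \<Rightarrow> real mat \<Rightarrow> real mat \<Rightarrow> real mat \<Rightarrow> real mat \<Rightarrow> bool" where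
  "mwgs A DA W R DR \<longleftrightarrow>
     (let r = dim_row A; s = dim_col A in
       s \<le> r \<and> DA \<in> carrier_mat r r \<and> diagonal_mat DA \<and> (\<forall>j<r. DA $$ (j,j) > 0)
       \<and> W \<in> carrier_mat r s \<and> R \<in> carrier_mat s s \<and> DR \<in> carrier_mat s s
       \<and> unit_upper_triangular R \<and> diagonal_mat DR \<and> (\<forall>j<s. DR $$ (j,j) \<noteq> 0)
       \<and> transpose_mat A = R * transpose_mat W
       \<and> transpose_mat W * DA * W = DR)"

(* Diff. UD scheme: inputs are the MWGS outputs W, R, D_R, the weight D_A and
   the derivatives dA = \<partial>_i A, dDA = \<partial>_i D_A *)
definition diffUD_M0 :: "real mat \<Rightarrow> real mat \<Rightarrow> real mat \<Rightarrow> real mat \<Rightarrow> real mat" where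
  "diffUD_M0 W R DA dA = transpose_mat W * DA * dA * transpose_mat (minv R)"

definition diffUD_M2 :: "real mat \<Rightarrow> real mat \<Rightarrow> real mat" where
  "diffUD_M2 W dDA = transpose_mat W * dDA * W"

definition diffUD_R :: "real mat \<Rightarrow> real mat \<Rightarrow> real mat \<Rightarrow> real mat \<Rightarrow> real mat \<Rightarrow> real mat \<Rightarrow> real mat" where
  "diffUD_R W R DR DA dA dDA =
     (let M0 = diffUD_M0 W R DA dA; M2 = diffUD_M2 W dDA in
      R * (transpose_mat (strict_lower M0) + strict_upper M0 + strict_upper M2) * minv DR)"

definition diffUD_D :: "real mat \<Rightarrow> real mat \<Rightarrow> real mat \<Rightarrow> real mat \<Rightarrow> real mat \<Rightarrow> real mat" where
  "diffUD_D W R DA dA dDA =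
     (let M0 = diffUD_M0 W R DA dA; M2 = diffUD_M2 W dDA in
      2 \<cdot>\<^sub>m diag_part M0 + diag_part M2)"

definition deriv0 :: "(real \<Rightarrow> real) \<Rightarrow> real" where
  "deriv0 g = (SOME D. (g has_real_derivative D) (at 0))"

(* partial derivative \<partial>_i along the basis vector i of \<theta>-space *)
definition mat_pd :: "'a::euclidean_space \<Rightarrow> ('a \<Rightarrow> real mat) \<Rightarrow> 'a \<Rightarrow> real mat" where
  "mat_pd i F \<theta> = mat (dim_row (F \<theta>)) (dim_col (F \<theta>))
     (\<lambda>(a,b). deriv0 (\<lambda>t. F (\<theta> + t *\<^sub>R i) $$ (a,b)))"

definition vec_pd :: "'a::euclidean_space \<Rightarrow> ('a \<Rightarrow> real vec) \<Rightarrow> 'a \<Rightarrow> real vec" where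
  "vec_pd i v \<theta> = vec (dim_vec (v \<theta>)) (\<lambda>a. deriv0 (\<lambda>t. v (\<theta> + t *\<^sub>R i) $ a))"

definition mat_diff :: "nat \<Rightarrow> nat \<Rightarrow> ('a::euclidean_space \<Rightarrow> real mat) \<Rightarrow> bool" where
  "mat_diff nr nc F \<longleftrightarrow> (\<forall>\<theta>. F \<theta> \<in> carrier_mat nr nc) \<and>
     (\<forall>\<theta>. \<forall>a<nr. \<forall>b<nc. (\<lambda>\<theta>'. F \<theta>' $$ (a,b)) differentiable (at \<theta>))"

definition vec_diff :: "nat \<Rightarrow> ('a::euclidean_space \<Rightarrow> real vec) \<Rightarrow> bool" where
  "vec_diff nr v \<longleftrightarrow> (\<forall>\<theta>. v \<theta> \<in> carrier_vec nr) \<and>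
     (\<forall>\<theta>. \<forall>a<nr. (\<lambda>\<theta>'. v \<theta>' $ a) differentiable (at \<theta>))"

end

theory Submission
  imports Defs "Jordan_Normal_Form.Determinant"
begin

definition mD :: "nat \<Rightarrow> nat \<Rightarrow> (real \<Rightarrow> real mat) \<Rightarrow> real mat \<Rightarrow> bool" where
  "mD nr nc f G \<longleftrightarrow> (\<forall>t. f t \<in> carrier_mat nr nc) \<and> G \<in> carrier_mat nr nc \<and>
     (\<forall>a<nr. \<forall>b<nc. ((\<lambda>t. f t $$ (a,b)) has_real_derivative G $$ (a,b)) (at 0))"

definition vD :: "nat \<Rightarrow> (real \<Rightarrow> real vec) \<Rightarrow> real vec \<Rightarrow> bool" where
  "vD nr f G \<longleftrightarrow> (\<forall>t. f t \<in> carrier_vec nr) \<and> G \<in> carrier_vec nr \<and>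
     (\<forall>a<nr. ((\<lambda>t. f t $ a) has_real_derivative G $ a) (at 0))"

lemma mD_unique: "mD nr nc f G \<Longrightarrow> mD nr nc f G' \<Longrightarrow> G = G'"
  unfolding mD_def by (intro eq_matI) (metis DERIV_unique carrier_matD)+

lemma vD_unique: "vD nr f G \<Longrightarrow> vD nr f G' \<Longrightarrow> G = G'"
  unfolding vD_def by (intro eq_vecI) (metis DERIV_unique carrier_vecD)+

lemma deriv0_eq: "(g has_real_derivative D) (at 0) \<Longrightarrow> deriv0 g = D"
  unfolding deriv0_def by (rule some_equality) (auto intro: DERIV_unique)

lemma mD_pd: assumes "mD nr nc (\<lambda>t. F (\<theta> + t *\<^sub>R i)) G" shows "mat_pd i F \<theta> = G"
proof -
  have c: "F \<theta> \<in> carrier_mat nr nc" using assms unfolding mD_def by (metis add.right_neutral scale_zero_left)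
  show ?thesis using assms c unfolding mD_def mat_pd_def
    by (intro eq_matI) (auto simp: deriv0_eq)
qed

lemma vD_pd: assumes "vD nr (\<lambda>t. F (\<theta> + t *\<^sub>R i)) G" shows "vec_pd i F \<theta> = G"
proof -
  have c: "F \<theta> \<in> carrier_vec nr" using assms unfolding vD_def by (metis add.right_neutral scale_zero_left)
  show ?thesis using assms c unfolding vD_def vec_pd_def
    by (intro eq_vecI) (auto simp: deriv0_eq)
qed

lemma dir_diff: fixes g :: "'a::euclidean_space \<Rightarrow> real"
  assumes "\<forall>\<theta>. g differentiable (at \<theta>)"
  shows "((\<lambda>t. g (\<theta> + t *\<^sub>R i)) has_real_derivative deriv0 (\<lambda>t. g (\<theta> + t *\<^sub>R i))) (at 0)"
proof -
  have h: "(\<lambda>t. \<theta> + t *\<^sub>R i) differentiable (at (0::real))"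
    by (rule differentiable_add[OF differentiable_const differentiable_scaleR[OF differentiable_ident differentiable_const]])
  have g: "g differentiable (at (\<theta> + (0::real) *\<^sub>R i))" using assms by blast
  have "(\<lambda>t. g (\<theta> + t *\<^sub>R i)) differentiable (at 0)"
    by (rule differentiable_compose[OF g h])
  then obtain D where "((\<lambda>t. g (\<theta> + t *\<^sub>R i)) has_real_derivative D) (at 0)"
    unfolding real_differentiable_def by blast
  then show ?thesis by (simp add: deriv0_eq)
qed

lemma mat_diff_mD: assumes "mat_diff nr nc F"
  shows "mD nr nc (\<lambda>t. F (\<theta> + t *\<^sub>R i)) (mat_pd i F \<theta>)"
proof -
  have c: "dim_row (F \<theta>) = nr" "dim_col (F \<theta>) = nc" using assms unfolding mat_diff_def by auto
  have d: "\<forall>\<theta>. (\<lambda>\<theta>'. F \<theta>' $$ (a,b)) differentiable (at \<theta>)" if "a < nr" "b < nc" for a b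
    using assms that unfolding mat_diff_def by blast
  show ?thesis using assms unfolding mat_diff_def mD_def mat_pd_def c
    by (simp add: dir_diff[OF d])
qed

lemma vec_diff_vD: assumes "vec_diff nr F"
  shows "vD nr (\<lambda>t. F (\<theta> + t *\<^sub>R i)) (vec_pd i F \<theta>)"
proof -
  have c: "dim_vec (F \<theta>) = nr" using assms unfolding vec_diff_def by auto
  have d: "\<forall>\<theta>. (\<lambda>\<theta>'. F \<theta>' $ a) differentiable (at \<theta>)" if "a < nr" for a
    using assms that unfolding vec_diff_def by blast
  show ?thesis using assms unfolding vec_diff_def vD_def vec_pd_def c
    by (simp add: dir_diff[OF d])
qed


lemma mult_entry: "A \<in> carrier_mat nr k \<Longrightarrow> B \<in> carrier_mat k nc \<Longrightarrow> a < nr \<Longrightarrow> b < nc \<Longrightarrow>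
  (A * B) $$ (a,b) = (\<Sum>c\<in>{0..<k}. A $$ (a,c) * B $$ (c,b))"
  by (auto simp: scalar_prod_def)

lemma mult_vec_entry: "A \<in> carrier_mat nr k \<Longrightarrow> v \<in> carrier_vec k \<Longrightarrow> a < nr \<Longrightarrow>
  (A *\<^sub>v v) $ a = (\<Sum>c\<in>{0..<k}. A $$ (a,c) * v $ c)"
  by (auto simp: scalar_prod_def)

lemma mD_carrier: "mD nr nc f F \<Longrightarrow> f t \<in> carrier_mat nr nc" "mD nr nc f F \<Longrightarrow> F \<in> carrier_mat nr nc"
  unfolding mD_def by auto

lemma vD_carrier: "vD nr f F \<Longrightarrow> f t \<in> carrier_vec nr" "vD nr f F \<Longrightarrow> F \<in> carrier_vec nr"
  unfolding vD_def by auto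

lemma mD_entry: "mD nr nc f F \<Longrightarrow> a < nr \<Longrightarrow> b < nc \<Longrightarrow> ((\<lambda>t. f t $$ (a,b)) has_real_derivative F $$ (a,b)) (at 0)"
  unfolding mD_def by auto

lemma vD_entry: "vD nr f F \<Longrightarrow> a < nr \<Longrightarrow> ((\<lambda>t. f t $ a) has_real_derivative F $ a) (at 0)"
  unfolding vD_def by auto

lemma mD_const: "c \<in> carrier_mat nr nc \<Longrightarrow> mD nr nc (\<lambda>t. c) (0\<^sub>m nr nc)"
  unfolding mD_def by auto

lemma vD_const: "c \<in> carrier_vec nr \<Longrightarrow> vD nr (\<lambda>t. c) (0\<^sub>v nr)"
  unfolding vD_def by auto

lemma mD_dims: "mD nr nc f F \<Longrightarrow> dim_row (f t) = nr" "mD nr nc f F \<Longrightarrow> dim_col (f t) = nc"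
  "mD nr nc f F \<Longrightarrow> dim_row F = nr" "mD nr nc f F \<Longrightarrow> dim_col F = nc"
  unfolding mD_def by auto

lemma vD_dims: "vD nr f F \<Longrightarrow> dim_vec (f t) = nr" "vD nr f F \<Longrightarrow> dim_vec F = nr"
  unfolding vD_def by auto

lemma mD_add: assumes f: "mD nr nc f F" and g: "mD nr nc g G" shows "mD nr nc (\<lambda>t. f t + g t) (F + G)"
proof -
  note d = mD_dims[OF f] mD_dims[OF g]
  show ?thesis using mD_entry[OF f] mD_entry[OF g] unfolding mD_def by (auto simp: d intro!: DERIV_add)
qed

lemma mD_diff: assumes f: "mD nr nc f F" and g: "mD nr nc g G" shows "mD nr nc (\<lambda>t. f t - g t) (F - G)"
proof -
  note d = mD_dims[OF f] mD_dims[OF g]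
  show ?thesis using mD_entry[OF f] mD_entry[OF g] unfolding mD_def by (auto simp: d intro!: DERIV_diff)
qed

lemma mD_uminus: assumes f: "mD nr nc f F" shows "mD nr nc (\<lambda>t. - f t) (- F)"
proof -
  note d = mD_dims[OF f]
  show ?thesis using mD_entry[OF f] unfolding mD_def by (auto simp: d intro!: DERIV_minus)
qed

lemma vD_add: assumes f: "vD nr f F" and g: "vD nr g G" shows "vD nr (\<lambda>t. f t + g t) (F + G)"
  unfolding vD_def
proof (intro conjI allI impI)
  note d = vD_dims[OF f] vD_dims[OF g]
  show "f t + g t \<in> carrier_vec nr" for t by (intro carrier_vecI) (simp add: d)
  show "F + G \<in> carrier_vec nr" by (intro carrier_vecI) (simp add: d)
  fix a assume a: "a < nr"
  have e: "(\<lambda>t. (f t + g t) $ a) = (\<lambda>t. f t $ a + g t $ a)" by (rule ext) (simp add: d a)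
  show "((\<lambda>t. (f t + g t) $ a) has_real_derivative (F + G) $ a) (at 0)"
    unfolding e using vD_entry[OF f a] vD_entry[OF g a] by (simp add: d a DERIV_add)
qed

lemma vD_diff: assumes f: "vD nr f F" and g: "vD nr g G" shows "vD nr (\<lambda>t. f t - g t) (F - G)"
  unfolding vD_def
proof (intro conjI allI impI)
  note d = vD_dims[OF f] vD_dims[OF g]
  show "f t - g t \<in> carrier_vec nr" for t by (intro carrier_vecI) (simp add: d)
  show "F - G \<in> carrier_vec nr" by (intro carrier_vecI) (simp add: d)
  fix a assume a: "a < nr"
  have e: "(\<lambda>t. (f t - g t) $ a) = (\<lambda>t. f t $ a - g t $ a)" by (rule ext) (simp add: d a)
  show "((\<lambda>t. (f t - g t) $ a) has_real_derivative (F - G) $ a) (at 0)"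
    unfolding e using vD_entry[OF f a] vD_entry[OF g a] by (simp add: d a DERIV_diff)
qed

lemma vD_uminus: assumes f: "vD nr f F" shows "vD nr (\<lambda>t. - f t) (- F)"
  unfolding vD_def
proof (intro conjI allI impI)
  note d = vD_dims[OF f]
  show "- f t \<in> carrier_vec nr" for t by (intro carrier_vecI) (simp add: d)
  show "- F \<in> carrier_vec nr" by (intro carrier_vecI) (simp add: d)
  fix a assume a: "a < nr"
  have e: "(\<lambda>t. (- f t) $ a) = (\<lambda>t. - (f t $ a))" by (rule ext) (simp add: d a)
  show "((\<lambda>t. (- f t) $ a) has_real_derivative (- F) $ a) (at 0)"
    unfolding e using vD_entry[OF f a] by (simp add: d a DERIV_minus)
qed

lemma mD_transpose: assumes f: "mD nr nc f F" shows "mD nc nr (\<lambda>t. transpose_mat (f t)) (transpose_mat F)"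
proof -
  note d = mD_dims[OF f]
  show ?thesis using mD_entry[OF f] unfolding mD_def by (auto simp: d)
qed

lemma mD_mult: assumes f: "mD nr k f F" and g: "mD k nc g G"
  shows "mD nr nc (\<lambda>t. f t * g t) (F * g 0 + f 0 * G)"
  unfolding mD_def
proof (intro conjI allI impI)
  have cf: "\<And>t. f t \<in> carrier_mat nr k" "F \<in> carrier_mat nr k" using f by (auto simp: mD_carrier)
  have cg: "\<And>t. g t \<in> carrier_mat k nc" "G \<in> carrier_mat k nc" using g by (auto simp: mD_carrier)
  show "f t * g t \<in> carrier_mat nr nc" for t using cf cg by (metis mult_carrier_mat)
  show "F * g 0 + f 0 * G \<in> carrier_mat nr nc" using cf cg by (metis mult_carrier_mat add_carrier_mat)
  fix a b assume a: "a < nr" and b: "b < nc"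
  have e: "(\<lambda>t. (f t * g t) $$ (a,b)) = (\<lambda>t. \<Sum>c\<in>{0..<k}. f t $$ (a,c) * g t $$ (c,b))"
    by (intro ext mult_entry[OF cf(1) cg(1) a b])
  have "(F * g 0 + f 0 * G) $$ (a,b) = (F * g 0) $$ (a,b) + (f 0 * G) $$ (a,b)"
    using a b by (simp add: mD_dims[OF f] mD_dims[OF g])
  also have "\<dots> = (\<Sum>c\<in>{0..<k}. F $$ (a,c) * g 0 $$ (c,b)) + (\<Sum>c\<in>{0..<k}. f 0 $$ (a,c) * G $$ (c,b))"
    by (simp only: mult_entry[OF cf(2) cg(1) a b] mult_entry[OF cf(1) cg(2) a b])
  also have "\<dots> = (\<Sum>c\<in>{0..<k}. F $$ (a,c) * g 0 $$ (c,b) + G $$ (c,b) * f 0 $$ (a,c))"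
    by (simp only: sum.distrib mult.commute[of "G $$ _" "f 0 $$ _"])
  finally have v: "(F * g 0 + f 0 * G) $$ (a,b) = (\<Sum>c\<in>{0..<k}. F $$ (a,c) * g 0 $$ (c,b) + G $$ (c,b) * f 0 $$ (a,c))" .
  have "((\<lambda>t. \<Sum>c\<in>{0..<k}. f t $$ (a,c) * g t $$ (c,b)) has_real_derivative
        (\<Sum>c\<in>{0..<k}. F $$ (a,c) * g 0 $$ (c,b) + G $$ (c,b) * f 0 $$ (a,c))) (at 0)"
  proof (rule DERIV_sum, rule DERIV_mult)
    fix c assume "c \<in> {0..<k}"
    then have c: "c < k" by simp
    show "((\<lambda>t. f t $$ (a,c)) has_real_derivative F $$ (a,c)) (at 0)" by (rule mD_entry[OF f a c])
    show "((\<lambda>t. g t $$ (c,b)) has_real_derivative G $$ (c,b)) (at 0)" by (rule mD_entry[OF g c b])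
  qed
  then show "((\<lambda>t. (f t * g t) $$ (a,b)) has_real_derivative (F * g 0 + f 0 * G) $$ (a,b)) (at 0)"
    unfolding e v .
qed

lemma mD_mult_vec: assumes f: "mD nr k f F" and g: "vD k g G"
  shows "vD nr (\<lambda>t. f t *\<^sub>v g t) (F *\<^sub>v g 0 + f 0 *\<^sub>v G)"
  unfolding vD_def
proof (intro conjI allI impI)
  have cf: "\<And>t. f t \<in> carrier_mat nr k" "F \<in> carrier_mat nr k" using f by (auto simp: mD_carrier)
  have cg: "\<And>t. g t \<in> carrier_vec k" "G \<in> carrier_vec k" using g by (auto simp: vD_carrier)
  show "f t *\<^sub>v g t \<in> carrier_vec nr" for t using cf cg by (metis mult_mat_vec_carrier)
  show "F *\<^sub>v g 0 + f 0 *\<^sub>v G \<in> carrier_vec nr" using cf cg by (metis mult_mat_vec_carrier add_carrier_vec)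
  fix a assume a: "a < nr"
  have e: "(\<lambda>t. (f t *\<^sub>v g t) $ a) = (\<lambda>t. \<Sum>c\<in>{0..<k}. f t $$ (a,c) * g t $ c)"
    by (intro ext mult_vec_entry[OF cf(1) cg(1) a])
  have "(F *\<^sub>v g 0 + f 0 *\<^sub>v G) $ a = (F *\<^sub>v g 0) $ a + (f 0 *\<^sub>v G) $ a"
    using a by (simp add: mD_dims[OF f])
  also have "\<dots> = (\<Sum>c\<in>{0..<k}. F $$ (a,c) * g 0 $ c) + (\<Sum>c\<in>{0..<k}. f 0 $$ (a,c) * G $ c)"
    by (simp only: mult_vec_entry[OF cf(2) cg(1) a] mult_vec_entry[OF cf(1) cg(2) a])
  also have "\<dots> = (\<Sum>c\<in>{0..<k}. F $$ (a,c) * g 0 $ c + G $ c * f 0 $$ (a,c))"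
    by (simp only: sum.distrib mult.commute[of "G $ _" "f 0 $$ _"])
  finally have v: "(F *\<^sub>v g 0 + f 0 *\<^sub>v G) $ a = (\<Sum>c\<in>{0..<k}. F $$ (a,c) * g 0 $ c + G $ c * f 0 $$ (a,c))" .
  have "((\<lambda>t. \<Sum>c\<in>{0..<k}. f t $$ (a,c) * g t $ c) has_real_derivative
        (\<Sum>c\<in>{0..<k}. F $$ (a,c) * g 0 $ c + G $ c * f 0 $$ (a,c))) (at 0)"
  proof (rule DERIV_sum, rule DERIV_mult)
    fix c assume "c \<in> {0..<k}"
    then have c: "c < k" by simp
    show "((\<lambda>t. f t $$ (a,c)) has_real_derivative F $$ (a,c)) (at 0)" by (rule mD_entry[OF f a c])
    show "((\<lambda>t. g t $ c) has_real_derivative G $ c) (at 0)" by (rule vD_entry[OF g c])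
  qed
  then show "((\<lambda>t. (f t *\<^sub>v g t) $ a) has_real_derivative (F *\<^sub>v g 0 + f 0 *\<^sub>v G) $ a) (at 0)"
    unfolding e v .
qed

lemma mD_hcat: assumes f: "mD nr c1 f F" and g: "mD nr c2 g G"
  shows "mD nr (c1 + c2) (\<lambda>t. hcat (f t) (g t)) (hcat F G)"
  unfolding mD_def
proof (intro conjI allI impI)
  note d = mD_dims[OF f] mD_dims[OF g]
  show "hcat (f t) (g t) \<in> carrier_mat nr (c1 + c2)" for t by (intro carrier_matI) (simp_all add: hcat_def d)
  show "hcat F G \<in> carrier_mat nr (c1 + c2)" by (intro carrier_matI) (simp_all add: hcat_def d)
  fix a b assume a: "a < nr" and b: "b < c1 + c2"
  have e: "(\<lambda>t. hcat (f t) (g t) $$ (a,b)) = (\<lambda>t. if b < c1 then f t $$ (a,b) else g t $$ (a, b - c1))"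
    by (rule ext) (simp add: hcat_def d a b)
  have v: "hcat F G $$ (a,b) = (if b < c1 then F $$ (a,b) else G $$ (a, b - c1))"
    by (simp add: hcat_def d a b)
  show "((\<lambda>t. hcat (f t) (g t) $$ (a,b)) has_real_derivative hcat F G $$ (a,b)) (at 0)"
  proof (cases "b < c1")
    case True then show ?thesis unfolding e v using mD_entry[OF f a True] by simp
  next
    case False then have "b - c1 < c2" using b by simp
    then show ?thesis unfolding e v using mD_entry[OF g a] False by simp
  qed
qed

lemma mD_four_block: assumes fa: "mD r1 c1 fa FA" and fb: "mD r1 c2 fb FB"
  and fc: "mD r2 c1 fc FC" and fd: "mD r2 c2 fd FD"
  shows "mD (r1 + r2) (c1 + c2) (\<lambda>t. four_block_mat (fa t) (fb t) (fc t) (fd t)) (four_block_mat FA FB FC FD)"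
  unfolding mD_def
proof (intro conjI allI impI)
  note d = mD_dims[OF fa] mD_dims[OF fb] mD_dims[OF fc] mD_dims[OF fd]
  show "four_block_mat (fa t) (fb t) (fc t) (fd t) \<in> carrier_mat (r1 + r2) (c1 + c2)" for t
    by (intro carrier_matI) (simp_all add: d)
  show "four_block_mat FA FB FC FD \<in> carrier_mat (r1 + r2) (c1 + c2)"
    by (intro carrier_matI) (simp_all add: d)
  fix a b assume a: "a < r1 + r2" and b: "b < c1 + c2"
  have e: "(\<lambda>t. four_block_mat (fa t) (fb t) (fc t) (fd t) $$ (a,b)) = (\<lambda>t. if a < r1 then
      if b < c1 then fa t $$ (a,b) else fb t $$ (a,b - c1)
      else if b < c1 then fc t $$ (a - r1, b) else fd t $$ (a - r1, b - c1))"
    by (rule ext) (simp add: d a b)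
  have v: "four_block_mat FA FB FC FD $$ (a,b) = (if a < r1 then
      if b < c1 then FA $$ (a,b) else FB $$ (a,b - c1)
      else if b < c1 then FC $$ (a - r1, b) else FD $$ (a - r1, b - c1))"
    by (simp add: d a b)
  have a2: "\<not> a < r1 \<Longrightarrow> a - r1 < r2" and b2: "\<not> b < c1 \<Longrightarrow> b - c1 < c2" using a b by auto
  show "((\<lambda>t. four_block_mat (fa t) (fb t) (fc t) (fd t) $$ (a,b)) has_real_derivative
     four_block_mat FA FB FC FD $$ (a,b)) (at 0)"
    unfolding e v
    by (cases "a < r1"; cases "b < c1")
       (simp_all add: mD_entry[OF fa] mD_entry[OF fb] mD_entry[OF fc] mD_entry[OF fd] a2 b2)
qed

lemma mD_dsum: assumes a: "mD r1 c1 fa FA" and d: "mD r2 c2 fd FD"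
  shows "mD (r1 + r2) (c1 + c2) (\<lambda>t. dsum (fa t) (fd t)) (dsum FA FD)"
proof -
  have e1: "(\<lambda>t. dsum (fa t) (fd t)) = (\<lambda>t. four_block_mat (fa t) (0\<^sub>m r1 c2) (0\<^sub>m r2 c1) (fd t))"
    unfolding dsum_def by (rule ext) (simp add: mD_dims[OF a] mD_dims[OF d])
  have e2: "dsum FA FD = four_block_mat FA (0\<^sub>m r1 c2) (0\<^sub>m r2 c1) FD"
    unfolding dsum_def by (simp add: mD_dims[OF a] mD_dims[OF d])
  show ?thesis unfolding e1 e2
    by (rule mD_four_block[OF a mD_const mD_const d]) (rule zero_carrier_mat)+
qed

lemma mD_blk: assumes f: "mD nr nc f F" and r: "r0 + a \<le> nr" and c: "c0 + b \<le> nc"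
  shows "mD a b (\<lambda>t. blk (f t) r0 c0 a b) (blk F r0 c0 a b)"
  unfolding mD_def
proof (intro conjI allI impI)
  show "blk (f t) r0 c0 a b \<in> carrier_mat a b" for t by (simp add: blk_def)
  show "blk F r0 c0 a b \<in> carrier_mat a b" by (simp add: blk_def)
  fix x y assume x: "x < a" and y: "y < b"
  have e: "(\<lambda>t. blk (f t) r0 c0 a b $$ (x,y)) = (\<lambda>t. f t $$ (r0 + x, c0 + y))"
    by (rule ext) (simp add: blk_def x y)
  have "r0 + x < nr" "c0 + y < nc" using x y r c by auto
  then show "((\<lambda>t. blk (f t) r0 c0 a b $$ (x,y)) has_real_derivative blk F r0 c0 a b $$ (x,y)) (at 0)"
    unfolding e using mD_entry[OF f] x y by (simp add: blk_def)
qed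

lemma differentiable_prod_fin: fixes g :: "'b \<Rightarrow> real \<Rightarrow> real"
  assumes "finite A" "\<forall>x\<in>A. (\<lambda>t. g x t) differentiable (at 0)"
  shows "(\<lambda>t. \<Prod>x\<in>A. g x t) differentiable (at 0)"
  using assms
proof (induction A rule: finite_induct)
  case empty then show ?case by simp
next
  case (insert x F)
  have h1: "(\<lambda>t. g x t) differentiable (at 0)" using insert by blast
  have h2: "(\<lambda>t. \<Prod>x\<in>F. g x t) differentiable (at 0)" using insert by blast
  have "(\<lambda>t. g x t * (\<Prod>x\<in>F. g x t)) differentiable (at 0)"
    by (rule differentiable_mult[OF h1 h2])
  then show ?case using insert by simp
qed

lemma det_differentiable: fixes f :: "real \<Rightarrow> real mat" assumes c: "\<forall>t. f t \<in> carrier_mat n n"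
  and d: "\<forall>a<n. \<forall>b<n. (\<lambda>t. f t $$ (a,b)) differentiable (at (0::real))"
  shows "(\<lambda>t. det (f t)) differentiable (at 0)"
proof -
  have e: "(\<lambda>t. det (f t)) = (\<lambda>t. \<Sum>p\<in>{p. p permutes {0..<n}}. signof p * (\<Prod>i\<in>{0..<n}. f t $$ (i, p i)))"
    by (rule ext) (rule det_def'[OF c[rule_format]])
  have "(\<lambda>t. \<Sum>p\<in>{p. p permutes {0..<n}}. signof p * (\<Prod>i\<in>{0..<n}. f t $$ (i, p i))) differentiable (at 0)"
  proof (rule differentiable_sum)
    show "finite {p. p permutes {0..<n}}" by (rule finite_permutations) simp
    show "\<forall>p\<in>{p. p permutes {0..<n}}. (\<lambda>t. signof p * (\<Prod>i\<in>{0..<n}. f t $$ (i, p i))) differentiable (at 0)"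
    proof
      fix p assume "p \<in> {p. p permutes {0..<n}}"
      then have p: "p permutes {0..<n}" by simp
      have "(\<lambda>t. \<Prod>i\<in>{0..<n}. f t $$ (i, p i)) differentiable (at 0)"
      proof (rule differentiable_prod_fin)
        show "\<forall>i\<in>{0..<n}. (\<lambda>t. f t $$ (i, p i)) differentiable (at 0)"
        proof
          fix i assume i: "i \<in> {0..<n}"
          then have "p i \<in> {0..<n}" using permutes_in_image[OF p] by simp
          then show "(\<lambda>t. f t $$ (i, p i)) differentiable (at 0)" using d i by simp
        qed
      qed simp
      then show "(\<lambda>t. signof p * (\<Prod>i\<in>{0..<n}. f t $$ (i, p i))) differentiable (at 0)"
        by (rule differentiable_mult[OF differentiable_const])
    qed
  qed
  then show ?thesis unfolding e .
qed

lemma minv_carrier: "A \<in> carrier_mat n n \<Longrightarrow> minv A \<in> carrier_mat n n"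
  unfolding minv_def using mat_inverse(2)[of A n] by (auto split: option.splits)

lemma minv_inv: assumes A: "A \<in> carrier_mat n n" and d: "det A \<noteq> 0"
  shows "A * minv A = 1\<^sub>m n" "minv A * A = 1\<^sub>m n" "minv A \<in> carrier_mat n n"
proof -
  have u: "A \<in> Units (ring_mat TYPE(real) n ())" by (rule det_non_zero_imp_unit[OF A d])
  obtain B where B: "mat_inverse A = Some B"
    using mat_inverse(1)[OF A, of "()"] u by (cases "mat_inverse A") auto
  have m: "minv A = B" unfolding minv_def B by simp
  show "A * minv A = 1\<^sub>m n" "minv A * A = 1\<^sub>m n" "minv A \<in> carrier_mat n n"
    using mat_inverse(2)[OF A B] unfolding m by auto
qed

lemma minv_adj: assumes A: "A \<in> carrier_mat n n" and d: "det A \<noteq> 0"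
  shows "minv A = (1 / det A) \<cdot>\<^sub>m adj_mat A"
proof -
  note i = minv_inv[OF A d]
  note a = adj_mat[OF A]
  have "(1 / det A) \<cdot>\<^sub>m adj_mat A * A = 1\<^sub>m n"
  proof -
    have "(1 / det A) \<cdot>\<^sub>m (det A \<cdot>\<^sub>m 1\<^sub>m n) = 1\<^sub>m n"
      using d by (intro eq_matI) auto
    then show ?thesis by (simp add: mult_smult_assoc_mat[OF a(1) A] a(3))
  qed
  then have "minv A = ((1 / det A) \<cdot>\<^sub>m adj_mat A * A) * minv A" using i by simp
  also have "\<dots> = (1 / det A) \<cdot>\<^sub>m adj_mat A * (A * minv A)"
    by (rule assoc_mult_mat[OF smult_carrier_mat[OF a(1)] A i(3)])
  also have "\<dots> = (1 / det A) \<cdot>\<^sub>m adj_mat A" using i(1) a(1) by simp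
  finally show ?thesis .
qed

lemma minv_entry_differentiable: fixes f :: "real \<Rightarrow> real mat" assumes c: "\<forall>t. f t \<in> carrier_mat n n"
  and d: "\<forall>a<n. \<forall>b<n. (\<lambda>t. f t $$ (a,b)) differentiable (at (0::real))"
  and nz: "\<forall>t. det (f t) \<noteq> 0" and ij: "i < n" "j < n"
  shows "(\<lambda>t. minv (f t) $$ (i,j)) differentiable (at 0)"
proof -
  have e: "(\<lambda>t. minv (f t) $$ (i,j)) = (\<lambda>t. ((-1)^(j+i) * det (mat_delete (f t) j i)) / det (f t))"
  proof
    fix t
    have A: "f t \<in> carrier_mat n n" using c by blast
    have "minv (f t) $$ (i,j) = (1 / det (f t)) * adj_mat (f t) $$ (i,j)"
      unfolding minv_adj[OF A nz[rule_format]] using adj_mat(1)[OF A] ij by simp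
    also have "\<dots> = ((-1)^(j+i) * det (mat_delete (f t) j i)) / det (f t)"
      using A ij by (simp add: adj_mat_def cofactor_def)
    finally show "minv (f t) $$ (i,j) = ((-1)^(j+i) * det (mat_delete (f t) j i)) / det (f t)" .
  qed
  have dd: "(\<lambda>t. det (mat_delete (f t) j i)) differentiable (at 0)"
  proof (rule det_differentiable)
    show "\<forall>t. mat_delete (f t) j i \<in> carrier_mat (n-1) (n-1)"
      using c mat_delete_carrier by blast
    show "\<forall>a<n-1. \<forall>b<n-1. (\<lambda>t. mat_delete (f t) j i $$ (a,b)) differentiable (at 0)"
    proof (intro allI impI)
      fix a b assume a: "a < n - 1" and b: "b < n - 1"
      have e2: "(\<lambda>t. mat_delete (f t) j i $$ (a,b)) =
         (\<lambda>t. f t $$ (if a < j then a else Suc a, if b < i then b else Suc b))"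
      proof
        fix t
        have A: "f t \<in> carrier_mat n n" using c by blast
        then show "mat_delete (f t) j i $$ (a,b) = f t $$ (if a < j then a else Suc a, if b < i then b else Suc b)"
          using a b unfolding mat_delete_def by simp
      qed
      have "(if a < j then a else Suc a) < n" "(if b < i then b else Suc b) < n" using a b by auto
      then show "(\<lambda>t. mat_delete (f t) j i $$ (a,b)) differentiable (at 0)"
        unfolding e2 using d by blast
    qed
  qed
  have d0: "(\<lambda>t. det (f t)) differentiable (at 0)" by (rule det_differentiable[OF c d])
  show ?thesis unfolding e
    by (rule differentiable_divide[OF differentiable_mult[OF differentiable_const dd] d0 nz[rule_format]])
qed

lemma mD_minv: assumes f: "mD n n f F" and nz: "\<forall>t. det (f t) \<noteq> 0"
  shows "mD n n (\<lambda>t. minv (f t)) (- (minv (f 0) * F * minv (f 0)))"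
proof -
  have c: "\<forall>t. f t \<in> carrier_mat n n" using f by (auto simp: mD_carrier)
  have d: "\<forall>a<n. \<forall>b<n. (\<lambda>t. f t $$ (a,b)) differentiable (at (0::real))"
    using mD_entry[OF f] real_differentiable_def by blast
  define G where "G = mat n n (\<lambda>(i,j). deriv0 (\<lambda>t. minv (f t) $$ (i,j)))"
  have mG: "mD n n (\<lambda>t. minv (f t)) G"
    unfolding mD_def
  proof (intro conjI allI impI)
    show "minv (f t) \<in> carrier_mat n n" for t using c minv_carrier by blast
    show "G \<in> carrier_mat n n" unfolding G_def by simp
    fix i j assume i: "i < n" and j: "j < n"
    obtain D where D: "((\<lambda>t. minv (f t) $$ (i,j)) has_real_derivative D) (at 0)"
      using minv_entry_differentiable[OF c d nz i j] real_differentiable_def by blast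
    show "((\<lambda>t. minv (f t) $$ (i,j)) has_real_derivative G $$ (i,j)) (at 0)"
      unfolding G_def using D i j by (simp add: deriv0_eq)
  qed
  note inv0 = minv_inv[OF c[rule_format] nz[rule_format], of 0]
  have cG: "G \<in> carrier_mat n n" using mG by (rule mD_carrier)
  have cF: "F \<in> carrier_mat n n" using f by (rule mD_carrier)
  have m1: "mD n n (\<lambda>t. f t * minv (f t)) (F * minv (f 0) + f 0 * G)"
    by (rule mD_mult[OF f mG])
  have e: "(\<lambda>t. f t * minv (f t)) = (\<lambda>t. 1\<^sub>m n)"
    using minv_inv(1)[OF c[rule_format] nz[rule_format]] by (rule ext)
  have m2: "mD n n (\<lambda>t. f t * minv (f t)) (0\<^sub>m n n)" unfolding e by (rule mD_const) simp
  have z: "F * minv (f 0) + f 0 * G = 0\<^sub>m n n" by (rule mD_unique[OF m1 m2])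
  have fG: "f 0 * G = - (F * minv (f 0))"
  proof (rule eq_matI)
    fix i j assume "i < dim_row (- (F * minv (f 0)))" "j < dim_col (- (F * minv (f 0)))"
    then have ij: "i < n" "j < n" using cF inv0(3) by auto
    have c0: "f 0 \<in> carrier_mat n n" using c by blast
    have "(F * minv (f 0) + f 0 * G) $$ (i,j) = 0" using z ij by simp
    then have "(F * minv (f 0)) $$ (i,j) + (f 0 * G) $$ (i,j) = 0"
      using ij carrier_matD[OF c0] carrier_matD[OF cG] by simp
    then show "(f 0 * G) $$ (i,j) = (- (F * minv (f 0))) $$ (i,j)"
      using ij carrier_matD[OF cF] carrier_matD[OF inv0(3)] by simp
  qed (use cF cG inv0(3) c in auto)
  have "G = (minv (f 0) * f 0) * G" using inv0(2) cG by simp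
  also have "\<dots> = minv (f 0) * (f 0 * G)" using inv0(3) c cG by (metis assoc_mult_mat)
  also have "\<dots> = minv (f 0) * (- (F * minv (f 0)))" unfolding fG ..
  also have "\<dots> = - (minv (f 0) * (F * minv (f 0)))"
    using inv0(3) cF by (intro uminus_mult_right_mat) auto
  also have "\<dots> = - (minv (f 0) * F * minv (f 0))"
    using inv0(3) cF by (metis assoc_mult_mat)
  finally show ?thesis using mG by simp
qed

lemma det_uut: assumes "unit_upper_triangular R" "R \<in> carrier_mat n n" shows "det R = 1"
proof -
  have "det R = (\<Prod>i = 0..<n. R $$ (i,i))"
    using assms det_upper_triangular[of R n] unfolding unit_upper_triangular_def
    by (simp add: prod_list_diag_prod)
  also have "\<dots> = 1" using assms unfolding unit_upper_triangular_def by simp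
  finally show ?thesis .
qed

lemma det_diag_nz: fixes D :: "real mat" assumes "diagonal_mat D" "D \<in> carrier_mat n n" "\<forall>j<n. D $$ (j,j) \<noteq> 0"
  shows "det D \<noteq> 0"
proof -
  have ut: "upper_triangular D" using assms unfolding diagonal_mat_def upper_triangular_def by auto
  have "det D = (\<Prod>i = 0..<n. D $$ (i,i))"
    using assms det_upper_triangular[OF ut] by (simp add: prod_list_diag_prod)
  also have "\<dots> \<noteq> 0" using assms(3) by (subst prod_zero_iff) auto
  finally show ?thesis .
qed

lemma uut_inv_upper: assumes u: "unit_upper_triangular R" and c: "R \<in> carrier_mat n n"
  shows "\<forall>i. j < i \<longrightarrow> i < n \<longrightarrow> minv R $$ (i,j) = 0"
proof (induction j rule: less_induct)
  case (less j)
  have d1: "det R \<noteq> 0" using det_uut[OF u c] by simp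
  note inv = minv_inv[OF c d1]
  show ?case
  proof (intro allI impI)
    fix i assume ji: "j < i" and i: "i < n"
    have j: "j < n" using ji i by simp
    have "0 = (minv R * R) $$ (i,j)" using inv(2) ji i j by simp
    also have "\<dots> = (\<Sum>k\<in>{0..<n}. minv R $$ (i,k) * R $$ (k,j))"
      by (rule mult_entry[OF inv(3) c i j])
    also have "\<dots> = (\<Sum>k\<in>{j}. minv R $$ (i,k) * R $$ (k,j))"
    proof (rule sum.mono_neutral_right)
      show "\<forall>k\<in>{0..<n} - {j}. minv R $$ (i,k) * R $$ (k,j) = 0"
      proof
        fix k assume k: "k \<in> {0..<n} - {j}"
        show "minv R $$ (i,k) * R $$ (k,j) = 0"
        proof (cases "k < j")
          case True then show ?thesis using less.IH[of k] ji i by auto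
        next
          case False then have "j < k" using k by auto
          then have "R $$ (k,j) = 0" using u c k unfolding unit_upper_triangular_def upper_triangular_def by auto
          then show ?thesis by simp
        qed
      qed
    qed (use j in auto)
    also have "\<dots> = minv R $$ (i,j)" using u c j unfolding unit_upper_triangular_def by simp
    finally show "minv R $$ (i,j) = 0" by simp
  qed
qed

lemma deriv_const_zero: "(\<forall>t. g t = c) \<Longrightarrow> (g has_real_derivative D) (at 0) \<Longrightarrow> D = 0"
proof -
  assume "\<forall>t. g t = c" "(g has_real_derivative D) (at 0)"
  then have "((\<lambda>t. c) has_real_derivative D) (at 0)" by (metis ext)
  then show "D = 0" using DERIV_const DERIV_unique by blast
qed

lemma uut_deriv: assumes R: "mD s s Rc dR" and u: "\<forall>t. unit_upper_triangular (Rc t)"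
  shows "\<forall>i<s. \<forall>j<s. j \<le> i \<longrightarrow> dR $$ (i,j) = 0"
proof (intro allI impI)
  fix i j assume i: "i < s" and j: "j < s" and ji: "j \<le> i"
  have "\<forall>t. Rc t $$ (i,j) = (if i = j then 1 else 0)"
    using u ji i mD_dims[OF R] unfolding unit_upper_triangular_def upper_triangular_def by auto
  then show "dR $$ (i,j) = 0" using mD_entry[OF R i j] by (rule deriv_const_zero)
qed

lemma diag_deriv: assumes R: "mD s s Dc dD" and u: "\<forall>t. diagonal_mat (Dc t)"
  shows "\<forall>i<s. \<forall>j<s. i \<noteq> j \<longrightarrow> dD $$ (i,j) = 0"
proof (intro allI impI)
  fix i j assume i: "i < s" and j: "j < s" and ji: "i \<noteq> j"
  have "\<forall>t. Dc t $$ (i,j) = 0"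
    using u ji i j mD_dims[OF R] unfolding diagonal_mat_def by auto
  then show "dD $$ (i,j) = 0" using mD_entry[OF R i j] by (rule deriv_const_zero)
qed

lemma assoc': fixes A B C :: "real mat"
  shows "dim_col A = dim_row B \<Longrightarrow> dim_col B = dim_row C \<Longrightarrow> (A * B) * C = A * (B * C)"
  by (rule assoc_mult_mat[of A "dim_row A" "dim_col A" B "dim_col B" C "dim_col C"]) auto

lemma add_mult': fixes A B C :: "real mat"
  shows "dim_row A = dim_row B \<Longrightarrow> dim_col A = dim_col B \<Longrightarrow> dim_col B = dim_row C \<Longrightarrow>
   (A + B) * C = A * C + B * C"
  by (rule add_mult_distrib_mat[of A "dim_row A" "dim_col A" B C "dim_col C"]) auto

lemma mult_add': fixes A B C :: "real mat"
  shows "dim_row B = dim_row C \<Longrightarrow> dim_col B = dim_col C \<Longrightarrow> dim_col A = dim_row B \<Longrightarrow>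
   A * (B + C) = A * B + A * C"
  by (rule mult_add_distrib_mat[of A "dim_row A" "dim_col A" B "dim_col B" C]) auto

lemma transpose_mult': fixes A B :: "real mat"
  shows "dim_col A = dim_row B \<Longrightarrow> transpose_mat (A * B) = transpose_mat B * transpose_mat A"
  by (rule transpose_mult[of A "dim_row A" "dim_col A" B "dim_col B"]) auto

lemma transpose_add': fixes A B :: "real mat"
  shows "dim_row A = dim_row B \<Longrightarrow> dim_col A = dim_col B \<Longrightarrow> transpose_mat (A + B) = transpose_mat A + transpose_mat B"
  by (rule transpose_add[of A "dim_row A" "dim_col A" B]) auto

lemma cancel_l: fixes Ri R Z :: "real mat"
  shows "Ri * R = 1\<^sub>m n \<Longrightarrow> dim_col Ri = dim_row R \<Longrightarrow> dim_col R = dim_row Z \<Longrightarrow> Ri * (R * Z) = Z"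
  by (metis assoc' index_one_mat(3) left_mult_one_mat' index_mult_mat(3))

lemmas mat_simps = assoc' add_mult' mult_add' transpose_mult' transpose_add'

lemma P_eq: fixes A DA W R DR :: "real mat"
  assumes c: "A \<in> carrier_mat r s" "DA \<in> carrier_mat r r" "W \<in> carrier_mat r s" "R \<in> carrier_mat s s"
     "DR \<in> carrier_mat s s"
  and e1: "transpose_mat A = R * transpose_mat W" and e2: "transpose_mat W * DA * W = DR"
  shows "transpose_mat A * DA * A = R * DR * transpose_mat R"
proof -
  note d = carrier_matD[OF c(1)] carrier_matD[OF c(2)] carrier_matD[OF c(3)] carrier_matD[OF c(4)] carrier_matD[OF c(5)]
  have A: "A = W * transpose_mat R"
    by (metis e1 transpose_transpose transpose_mult[OF c(4), of "transpose_mat W" r] transpose_carrier_mat c(3))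
  have "transpose_mat A * DA * A = R * transpose_mat W * DA * (W * transpose_mat R)"
    unfolding e1 by (simp add: A)
  also have "\<dots> = R * (transpose_mat W * DA * W) * transpose_mat R"
    by (simp add: d mat_simps)
  also have "\<dots> = R * DR * transpose_mat R" unfolding e2 ..
  finally show ?thesis .
qed

lemma diag_transpose: fixes D :: "real mat"
  assumes "diagonal_mat D" "D \<in> carrier_mat n n" shows "transpose_mat D = D"
  using assms unfolding diagonal_mat_def by (intro eq_matI) (auto, metis)

lemma prod_entry_zero: fixes A B :: "real mat"
  assumes "A \<in> carrier_mat n n" "B \<in> carrier_mat n n" "i < n" "j < n"
    "\<forall>k<n. A $$ (i,k) = 0 \<or> B $$ (k,j) = 0"
  shows "(A * B) $$ (i,j) = 0"
  unfolding mult_entry[OF assms(1,2,3,4)] by (rule sum.neutral) (use assms(5) in auto)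

lemma diffUD_correct:
  fixes Ac DAc Wc Rc DRc :: "real \<Rightarrow> real mat"
  assumes mw: "\<And>t. mwgs (Ac t) (DAc t) (Wc t) (Rc t) (DRc t)"
    and A: "mD r s Ac dA" and DA: "mD r r DAc dDA" and R: "mD s s Rc dR" and DR: "mD s s DRc dDR"
  shows "dR = diffUD_R (Wc 0) (Rc 0) (DRc 0) (DAc 0) dA dDA \<and> dDR = diffUD_D (Wc 0) (Rc 0) (DAc 0) dA dDA"
proof -
  have mwt: "DAc t \<in> carrier_mat r r \<and> diagonal_mat (DAc t) \<and> Wc t \<in> carrier_mat r s \<and> Rc t \<in> carrier_mat s s
     \<and> DRc t \<in> carrier_mat s s \<and> unit_upper_triangular (Rc t) \<and> diagonal_mat (DRc t)
     \<and> (\<forall>j<s. DRc t $$ (j,j) \<noteq> 0) \<and> transpose_mat (Ac t) = Rc t * transpose_mat (Wc t)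
     \<and> transpose_mat (Wc t) * DAc t * Wc t = DRc t" for t
    using mw[of t] mD_dims(1,2)[OF A, of t] unfolding mwgs_def Let_def by simp
  have cA: "Ac t \<in> carrier_mat r s" for t using A by (rule mD_carrier)
  have Peq: "(\<lambda>t. transpose_mat (Ac t) * DAc t * Ac t) = (\<lambda>t. Rc t * DRc t * transpose_mat (Rc t))"
  proof
    fix t show "transpose_mat (Ac t) * DAc t * Ac t = Rc t * DRc t * transpose_mat (Rc t)"
      using mwt[of t] cA[of t] by (intro P_eq[of _ r s]) auto
  qed
  have m1: "mD s s (\<lambda>t. transpose_mat (Ac t) * DAc t * Ac t)
     ((transpose_mat dA * DAc 0 + transpose_mat (Ac 0) * dDA) * Ac 0 + transpose_mat (Ac 0) * DAc 0 * dA)"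
    using mD_mult[OF mD_mult[OF mD_transpose[OF A] DA] A] by simp
  have m2: "mD s s (\<lambda>t. Rc t * DRc t * transpose_mat (Rc t))
     ((dR * DRc 0 + Rc 0 * dDR) * transpose_mat (Rc 0) + Rc 0 * DRc 0 * transpose_mat dR)"
    using mD_mult[OF mD_mult[OF R DR] mD_transpose[OF R]] by simp
  have E: "(transpose_mat dA * DAc 0 + transpose_mat (Ac 0) * dDA) * Ac 0 + transpose_mat (Ac 0) * DAc 0 * dA
     = (dR * DRc 0 + Rc 0 * dDR) * transpose_mat (Rc 0) + Rc 0 * DRc 0 * transpose_mat dR"
    by (rule mD_unique[OF m1]) (use m2 Peq in simp)
  define A0 where "A0 = Ac 0"
  define DA0 where "DA0 = DAc 0"
  define W0 where "W0 = Wc 0"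
  define R0 where "R0 = Rc 0"
  define DR0 where "DR0 = DRc 0"
  note m0 = mwt[of 0, folded A0_def DA0_def W0_def R0_def DR0_def]
  have cA0: "A0 \<in> carrier_mat r s" unfolding A0_def by (rule cA)
  have dR0: "det R0 \<noteq> 0" using det_uut[of R0 s] m0 by simp
  have dDR0: "det DR0 \<noteq> 0" using det_diag_nz[of DR0 s] m0 by simp
  define Ri where "Ri = minv R0"
  define DRi where "DRi = minv DR0"
  have iR: "R0 * Ri = 1\<^sub>m s" "Ri * R0 = 1\<^sub>m s" "Ri \<in> carrier_mat s s"
    unfolding Ri_def using minv_inv[OF _ dR0] m0 by auto
  have iDR: "DR0 * DRi = 1\<^sub>m s" "DRi * DR0 = 1\<^sub>m s" "DRi \<in> carrier_mat s s"
    unfolding DRi_def using minv_inv[OF _ dDR0] m0 by auto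
  have A0e: "A0 = W0 * transpose_mat R0"
    using m0 by (metis transpose_transpose transpose_mult[of R0 s s "transpose_mat W0" r] transpose_carrier_mat)
  have A0t: "transpose_mat A0 = R0 * transpose_mat W0" using m0 by simp
  have DAt: "transpose_mat DA0 = DA0" using m0 diag_transpose by blast
  have DRt: "transpose_mat DR0 = DR0" using m0 diag_transpose by blast
  note d = carrier_matD[OF cA0] carrier_matD[of DA0 r r] carrier_matD[of W0 r s] carrier_matD[of R0 s s]
    carrier_matD[of DR0 s s] carrier_matD[OF iR(3)] carrier_matD[OF iDR(3)]
    mD_dims[OF A] mD_dims[OF DA] mD_dims[OF R] mD_dims[OF DR]
  have dd: "dim_row DA0 = r" "dim_col DA0 = r" "dim_row W0 = r" "dim_col W0 = s" "dim_row R0 = s" "dim_col R0 = s"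
     "dim_row DR0 = s" "dim_col DR0 = s" "dim_row Ri = s" "dim_col Ri = s" "dim_row DRi = s" "dim_col DRi = s"
     "dim_row dA = r" "dim_col dA = s" "dim_row dDA = r" "dim_col dDA = r" "dim_row dR = s" "dim_col dR = s"
     "dim_row dDR = s" "dim_col dDR = s"
    using m0 iR iDR mD_dims[OF A] mD_dims[OF DA] mD_dims[OF R] mD_dims[OF DR] by auto
  have RtRit: "transpose_mat R0 * transpose_mat Ri = 1\<^sub>m s"
    using iR transpose_mult[of Ri s s R0 s] m0 by (metis transpose_one)
  have canc: "Ri * (R0 * Z) = Z" if "dim_row Z = s" for Z
    using cancel_l[OF iR(2)] that dd by simp
  have canc2: "R0 * (Ri * Z) = Z" if "dim_row Z = s" for Z
    using cancel_l[OF iR(1)] that dd by simp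
  define M0 where "M0 = diffUD_M0 W0 R0 DA0 dA"
  define M2 where "M2 = diffUD_M2 W0 dDA"
  define X where "X = Ri * dR * DR0"
  have sw1: "Ri * ((transpose_mat dA * DA0 + transpose_mat A0 * dDA) * A0 + transpose_mat A0 * DA0 * dA) * transpose_mat Ri
     = transpose_mat M0 + M2 + M0"
    unfolding M0_def M2_def diffUD_M0_def diffUD_M2_def A0t Ri_def[symmetric]
    unfolding A0e by (simp add: dd mat_simps DAt RtRit canc)
  have sw2: "Ri * ((dR * DR0 + R0 * dDR) * transpose_mat R0 + R0 * DR0 * transpose_mat dR) * transpose_mat Ri
     = X + dDR + transpose_mat X"
    unfolding X_def by (simp add: dd mat_simps DRt RtRit canc)
  have EQ: "transpose_mat M0 + M2 + M0 = X + dDR + transpose_mat X"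
    using E unfolding sw1[symmetric] sw2[symmetric] A0_def DA0_def R0_def DR0_def by simp
  have u0: "unit_upper_triangular R0" "diagonal_mat DR0" "\<forall>j<s. DR0 $$ (j,j) \<noteq> 0" using m0 by auto
  have cR0: "R0 \<in> carrier_mat s s" and cDR0: "DR0 \<in> carrier_mat s s" using m0 by auto
  have cdR: "dR \<in> carrier_mat s s" using R by (rule mD_carrier)
  have cdDR: "dDR \<in> carrier_mat s s" using DR by (rule mD_carrier)
  have dRz: "\<forall>i<s. \<forall>j<s. j \<le> i \<longrightarrow> dR $$ (i,j) = 0"
    by (rule uut_deriv[OF R]) (use mwt in blast)
  have dDRz: "\<forall>i<s. \<forall>j<s. i \<noteq> j \<longrightarrow> dDR $$ (i,j) = 0"
    by (rule diag_deriv[OF DR]) (use mwt in blast)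
  have Riz: "j < i \<Longrightarrow> i < s \<Longrightarrow> Ri $$ (i,j) = 0" for i j
    using uut_inv_upper[OF u0(1) cR0, of j] unfolding Ri_def by blast
  have Yz: "(dR * DR0) $$ (k,j) = 0" if kj: "k < s" "j < s" "j \<le> k" for k j
  proof (rule prod_entry_zero[OF cdR cDR0 kj(1,2)], intro allI impI)
    fix l assume l: "l < s"
    show "dR $$ (k,l) = 0 \<or> DR0 $$ (l,j) = 0"
    proof (cases "l \<le> k")
      case True then show ?thesis using dRz kj l by blast
    next
      case False then have "l \<noteq> j" using kj by auto
      then show ?thesis using u0(2) cDR0 l kj unfolding diagonal_mat_def by auto
    qed
  qed
  have Xe: "X = Ri * (dR * DR0)" unfolding X_def by (simp add: dd mat_simps)
  have cY: "dR * DR0 \<in> carrier_mat s s" using cdR cDR0 by simp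
  have Xz: "X $$ (i,j) = 0" if ij: "i < s" "j < s" "j \<le> i" for i j
    unfolding Xe
  proof (rule prod_entry_zero[OF iR(3) cY ij(1,2)], intro allI impI)
    fix k assume k: "k < s"
    show "Ri $$ (i,k) = 0 \<or> (dR * DR0) $$ (k,j) = 0"
    proof (cases "k < i")
      case True then show ?thesis using Riz ij by blast
    next
      case False then show ?thesis using Yz[of k j] ij k by auto
    qed
  qed
  have dM: "dim_row M0 = s" "dim_col M0 = s" "dim_row M2 = s" "dim_col M2 = s" "dim_row X = s" "dim_col X = s"
    unfolding M0_def M2_def X_def diffUD_M0_def diffUD_M2_def Ri_def[symmetric] by (simp_all add: dd)
  have EQe: "M0 $$ (j,i) + M2 $$ (i,j) + M0 $$ (i,j) = X $$ (i,j) + dDR $$ (i,j) + X $$ (j,i)"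
    if ij: "i < s" "j < s" for i j
  proof -
    have "(transpose_mat M0 + M2 + M0) $$ (i,j) = (X + dDR + transpose_mat X) $$ (i,j)" using EQ by simp
    then show ?thesis using ij by (simp add: dM dd)
  qed
  have Seq: "transpose_mat (strict_lower M0) + strict_upper M0 + strict_upper M2 = X"
  proof (rule eq_matI)
    fix i j assume "i < dim_row X" "j < dim_col X"
    then have ij: "i < s" "j < s" using dM by auto
    show "(transpose_mat (strict_lower M0) + strict_upper M0 + strict_upper M2) $$ (i,j) = X $$ (i,j)"
    proof (cases "i < j")
      case True
      have "dDR $$ (i,j) = 0" using dDRz ij True by auto
      moreover have "X $$ (j,i) = 0" using Xz[of j i] ij True by auto
      ultimately show ?thesis using EQe[OF ij] ij True
        by (simp add: dM strict_lower_def strict_upper_def)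
    next
      case False
      then show ?thesis using Xz[of i j] ij by (simp add: dM strict_lower_def strict_upper_def)
    qed
  qed (simp_all add: dM strict_lower_def strict_upper_def)
  have g1: "dR = diffUD_R W0 R0 DR0 DA0 dA dDA"
  proof -
    have "diffUD_R W0 R0 DR0 DA0 dA dDA = R0 * X * DRi"
      unfolding diffUD_R_def Let_def M0_def[symmetric] M2_def[symmetric] DRi_def[symmetric] Seq ..
    also have "\<dots> = dR" unfolding X_def by (simp add: dd mat_simps iDR(1) canc2)
    finally show ?thesis by simp
  qed
  have g2: "dDR = diffUD_D W0 R0 DA0 dA dDA"
  proof -
    have "diffUD_D W0 R0 DA0 dA dDA = 2 \<cdot>\<^sub>m diag_part M0 + diag_part M2"
      unfolding diffUD_D_def Let_def M0_def[symmetric] M2_def[symmetric] ..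
    also have "\<dots> = dDR"
    proof (rule eq_matI)
      fix i j assume "i < dim_row dDR" "j < dim_col dDR"
      then have ij: "i < s" "j < s" using dd by auto
      show "(2 \<cdot>\<^sub>m diag_part M0 + diag_part M2) $$ (i,j) = dDR $$ (i,j)"
      proof (cases "i = j")
        case True
        have "X $$ (i,i) = 0" using Xz[of i i] ij by auto
        then show ?thesis using EQe[OF ij] ij True by (simp add: dM diag_part_def)
      next
        case False then show ?thesis using dDRz ij by (simp add: dM diag_part_def)
      qed
    qed (simp_all add: dM dd diag_part_def)
    finally show ?thesis by simp
  qed
  show ?thesis using g1 g2 unfolding W0_def R0_def DR0_def DA0_def by simp
qed

lemma add_mult_vec': fixes A B :: "real mat"
  shows "dim_row A = dim_row B \<Longrightarrow> dim_col A = dim_col B \<Longrightarrow> dim_col B = dim_vec v \<Longrightarrow>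
   (A + B) *\<^sub>v v = A *\<^sub>v v + B *\<^sub>v v"
  by (rule add_mult_distrib_mat_vec[of A "dim_row A" "dim_col A"]) (auto intro!: carrier_vecI)

lemma mult_add_vec': fixes A :: "real mat"
  shows "dim_vec v = dim_vec w \<Longrightarrow> dim_col A = dim_vec v \<Longrightarrow> A *\<^sub>v (v + w) = A *\<^sub>v v + A *\<^sub>v w"
  by (rule mult_add_distrib_mat_vec[of A "dim_row A" "dim_col A"]) (auto intro!: carrier_vecI)

lemma assoc_vec': fixes A B :: "real mat"
  shows "dim_col A = dim_row B \<Longrightarrow> dim_col B = dim_vec v \<Longrightarrow> (A * B) *\<^sub>v v = A *\<^sub>v (B *\<^sub>v v)"
  by (rule assoc_mult_mat_vec[of A "dim_row A" "dim_col A" B "dim_col B"]) (auto intro!: carrier_vecI)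

lemma mult_zero_vec': fixes A :: "real mat"
  shows "dim_col A = n \<Longrightarrow> A *\<^sub>v 0\<^sub>v n = 0\<^sub>v (dim_row A)"
  by (intro eq_vecI) (auto simp: scalar_prod_def)

lemma uminus_right': fixes A B :: "real mat"
  shows "dim_col A = dim_row B \<Longrightarrow> A * (- B) = - (A * B)"
  by (rule uminus_mult_right_mat)

lemma uminus_left': fixes A B :: "real mat"
  shows "dim_col A = dim_row B \<Longrightarrow> (- A) * B = - (A * B)"
  by (rule uminus_mult_left_mat) simp

lemmas vec_simps = add_mult_vec' mult_add_vec' assoc_vec' mult_zero_vec' uminus_right' uminus_left'

lemma blk_four_block: fixes A B C D :: "real mat"
  assumes "A \<in> carrier_mat n1 m1" "B \<in> carrier_mat n1 m2" "C \<in> carrier_mat n2 m1" "D \<in> carrier_mat n2 m2"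
  shows "blk (four_block_mat A B C D) 0 0 n1 m1 = A" "blk (four_block_mat A B C D) 0 m1 n1 m2 = B"
        "blk (four_block_mat A B C D) n1 m1 n2 m2 = D"
  using assms by (auto intro!: eq_matI simp: blk_def)

lemma blk_dsum: fixes A D :: "real mat"
  assumes "A \<in> carrier_mat n1 m1" "D \<in> carrier_mat n2 m2"
  shows "blk (dsum A D) 0 0 n1 m1 = A" "blk (dsum A D) n1 m1 n2 m2 = D"
  using assms unfolding dsum_def by (auto intro!: eq_matI simp: blk_def)

lemma uut_four_block: fixes A B D :: "real mat"
  assumes u: "unit_upper_triangular (four_block_mat A B (0\<^sub>m m n) D)"
    and c: "A \<in> carrier_mat n n" "B \<in> carrier_mat n m" "D \<in> carrier_mat m m"
  shows "unit_upper_triangular D"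
proof -
  have h: "\<forall>i<n+m. \<forall>j<i. four_block_mat A B (0\<^sub>m m n) D $$ (i,j) = 0"
     "\<forall>i<n+m. four_block_mat A B (0\<^sub>m m n) D $$ (i,i) = 1"
    using u c unfolding unit_upper_triangular_def upper_triangular_def by auto
  have "D $$ (i,j) = 0" if "i < m" "j < i" for i j
    using h(1)[rule_format, of "n+i" "n+j"] that c by simp
  moreover have "D $$ (i,i) = 1" if "i < m" for i
    using h(2)[rule_format, of "n+i"] that c by simp
  ultimately show ?thesis using c unfolding unit_upper_triangular_def upper_triangular_def by auto
qed

lemma pd_det: fixes M :: "real mat" assumes "pos_def_mat M" "M \<in> carrier_mat n n" shows "det M \<noteq> 0"
proof
  assume "det M = 0"
  then obtain v where v: "v \<in> carrier_vec n" "v \<noteq> 0\<^sub>v n" "M *\<^sub>v v = 0\<^sub>v n"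
    using det_0_iff_vec_prod_zero[OF assms(2)] by blast
  have "scalar_prod v (M *\<^sub>v v) > 0" using assms v unfolding pos_def_mat_def by auto
  then show False using v by simp
qed

lemma uut_det: "unit_upper_triangular M \<Longrightarrow> M \<in> carrier_mat n n \<Longrightarrow> det M \<noteq> 0"
  using det_uut by simp

lemma mult_minus_vec': fixes A :: "real mat"
  shows "dim_vec v = dim_vec w \<Longrightarrow> dim_col A = dim_vec v \<Longrightarrow> A *\<^sub>v (v - w) = A *\<^sub>v v - A *\<^sub>v w"
  by (rule mult_minus_distrib_mat_vec[of A "dim_row A" "dim_col A"]) (auto intro!: carrier_vecI)

lemma add_zero_vec': fixes u :: "real vec" shows "dim_vec u = n \<Longrightarrow> u + 0\<^sub>v n = u"
  by (intro eq_vecI) auto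

lemma zero_minus_vec': fixes u :: "real vec" shows "dim_vec u = n \<Longrightarrow> 0\<^sub>v n - u = - u"
  by (intro eq_vecI) auto

lemma mult_uminus_vec': fixes A :: "real mat"
  shows "dim_col A = dim_vec v \<Longrightarrow> A *\<^sub>v (- v) = - (A *\<^sub>v v)"
  by (intro eq_vecI) (auto simp: scalar_prod_def sum_negf[symmetric])

theorem proposition2:
  fixes n m r N :: nat
    and T B Z \<beta> Q S H \<Pi>0 :: "'a::euclidean_space \<Rightarrow> real mat"
    and \<alpha>0 :: "'a \<Rightarrow> real vec"
    and x y :: "nat \<Rightarrow> real vec"
    and U\<Pi> D\<Pi> UH DH UQ DQ :: "'a \<Rightarrow> real mat"
    \<comment> \<open>Algorithm 1a outputs (functions of \<theta> and k)\<close>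
    and ap af e eb :: "'a \<Rightarrow> nat \<Rightarrow> real vec"
    and UPp DPp UPf DPf URe DRe Ku Wt Wm :: "'a \<Rightarrow> nat \<Rightarrow> real mat"
    \<comment> \<open>Algorithm 1b outputs (functions of i, \<theta> and k)\<close>
    and dap daf deb :: "'a \<Rightarrow> 'a \<Rightarrow> nat \<Rightarrow> real vec"
    and dUPp dDPp dUPf dDPf dURe dDRe dKu :: "'a \<Rightarrow> 'a \<Rightarrow> nat \<Rightarrow> real mat"
    and Tb Bb Qb :: "'a \<Rightarrow> real mat"
  defines "Tb \<equiv> \<lambda>\<theta>. T \<theta> - S \<theta> * minv (H \<theta>) * Z \<theta>"
      and "Bb \<equiv> \<lambda>\<theta>. B \<theta> - S \<theta> * minv (H \<theta>) * \<beta> \<theta>"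
      and "Qb \<equiv> \<lambda>\<theta>. Q \<theta> - S \<theta> * minv (H \<theta>) * transpose_mat (S \<theta>)"
  \<comment> \<open>model, differentiable in \<theta>\<close>
  assumes model_diff:
    "mat_diff n n T" "mat_diff n r B" "mat_diff m n Z" "mat_diff m r \<beta>"
    "mat_diff n n Q" "mat_diff n m S" "mat_diff m m H" "mat_diff n n \<Pi>0" "vec_diff n \<alpha>0"
    and data: "\<And>k. x k \<in> carrier_vec r" "\<And>k. y k \<in> carrier_vec m"
    and cov: "\<And>\<theta>. pos_semidef_mat (four_block_mat (Q \<theta>) (S \<theta>) (transpose_mat (S \<theta>)) (H \<theta>))"
    and Pi0_pd: "\<And>\<theta>. pos_def_mat (\<Pi>0 \<theta>)"
    and H_pd: "\<And>\<theta>. pos_def_mat (H \<theta>)"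
  \<comment> \<open>UD factorizations of \<Pi>0, H, Qbar (differentiable)\<close>
    and fact: "\<And>\<theta>. udu (\<Pi>0 \<theta>) (U\<Pi> \<theta>) (D\<Pi> \<theta>)" "\<And>\<theta>. udu (H \<theta>) (UH \<theta>) (DH \<theta>)"
              "\<And>\<theta>. udu (Qb \<theta>) (UQ \<theta>) (DQ \<theta>)"
    and fact_diff: "mat_diff n n U\<Pi>" "mat_diff n n D\<Pi>" "mat_diff m m UH" "mat_diff m m DH"
              "mat_diff n n UQ" "mat_diff n n DQ"
  \<comment> \<open>Algorithm 1a\<close>
    and A_init: "\<And>\<theta>. af \<theta> 0 = \<alpha>0 \<theta>" "\<And>\<theta>. UPf \<theta> 0 = U\<Pi> \<theta>" "\<And>\<theta>. DPf \<theta> 0 = D\<Pi> \<theta>"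
    and A_pred: "\<And>\<theta> k. 1 \<le> k \<Longrightarrow> k \<le> N \<Longrightarrow>
       ap \<theta> k = Tb \<theta> *\<^sub>v af \<theta> (k-1) + Bb \<theta> *\<^sub>v x (k-1) + (S \<theta> * minv (H \<theta>)) *\<^sub>v y (k-1)"
    and A_time: "\<And>\<theta> k. 1 \<le> k \<Longrightarrow> k \<le> N \<Longrightarrow>
       mwgs (transpose_mat (hcat (Tb \<theta> * UPf \<theta> (k-1)) (UQ \<theta>))) (dsum (DPf \<theta> (k-1)) (DQ \<theta>))
            (Wt \<theta> k) (UPp \<theta> k) (DPp \<theta> k)"
    and A_meas: "\<And>\<theta> k. 1 \<le> k \<Longrightarrow> k \<le> N \<Longrightarrow>
       mwgs (transpose_mat (four_block_mat (UPp \<theta> k) (0\<^sub>m n m) (Z \<theta> * UPp \<theta> k) (UH \<theta>)))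
            (dsum (DPp \<theta> k) (DH \<theta>))
            (Wm \<theta> k) (four_block_mat (UPf \<theta> k) (Ku \<theta> k) (0\<^sub>m m n) (URe \<theta> k))
            (dsum (DPf \<theta> k) (DRe \<theta> k))"
    and A_dims: "\<And>\<theta> k. k \<le> N \<Longrightarrow> UPf \<theta> k \<in> carrier_mat n n \<and> DPf \<theta> k \<in> carrier_mat n n
       \<and> Ku \<theta> k \<in> carrier_mat n m \<and> URe \<theta> k \<in> carrier_mat m m \<and> DRe \<theta> k \<in> carrier_mat m m"
    and A_innov: "\<And>\<theta> k. 1 \<le> k \<Longrightarrow> k \<le> N \<Longrightarrow> e \<theta> k = y k - Z \<theta> *\<^sub>v ap \<theta> k - \<beta> \<theta> *\<^sub>v x k"
    and A_ebar: "\<And>\<theta> k. 1 \<le> k \<Longrightarrow> k \<le> N \<Longrightarrow> eb \<theta> k = minv (URe \<theta> k) *\<^sub>v e \<theta> k"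
    and A_filt: "\<And>\<theta> k. 1 \<le> k \<Longrightarrow> k \<le> N \<Longrightarrow> af \<theta> k = ap \<theta> k + Ku \<theta> k *\<^sub>v eb \<theta> k"
  \<comment> \<open>all quantities of Algorithm 1a are differentiable in \<theta>\<close>
    and A_diff: "\<And>k. k \<le> N \<Longrightarrow>
       vec_diff n (\<lambda>\<theta>. ap \<theta> k) \<and> vec_diff n (\<lambda>\<theta>. af \<theta> k) \<and> vec_diff m (\<lambda>\<theta>. e \<theta> k)
       \<and> vec_diff m (\<lambda>\<theta>. eb \<theta> k)
       \<and> mat_diff n n (\<lambda>\<theta>. UPp \<theta> k) \<and> mat_diff n n (\<lambda>\<theta>. DPp \<theta> k)
       \<and> mat_diff n n (\<lambda>\<theta>. UPf \<theta> k) \<and> mat_diff n n (\<lambda>\<theta>. DPf \<theta> k)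
       \<and> mat_diff m m (\<lambda>\<theta>. URe \<theta> k) \<and> mat_diff m m (\<lambda>\<theta>. DRe \<theta> k)
       \<and> mat_diff n m (\<lambda>\<theta>. Ku \<theta> k)
       \<and> mat_diff (n + n) n (\<lambda>\<theta>. Wt \<theta> k) \<and> mat_diff (n + m) (n + m) (\<lambda>\<theta>. Wm \<theta> k)"
  \<comment> \<open>Algorithm 1b: initialization\<close>
    and B_init: "\<And>i \<theta>. i \<in> Basis \<Longrightarrow>
       dUPf i \<theta> 0 = mat_pd i U\<Pi> \<theta> \<and> dDPf i \<theta> 0 = mat_pd i D\<Pi> \<theta> \<and> daf i \<theta> 0 = vec_pd i \<alpha>0 \<theta>"
  \<comment> \<open>Algorithm 1b (a)\<close>
    and B_pred: "\<And>i \<theta> k. i \<in> Basis \<Longrightarrow> 1 \<le> k \<Longrightarrow> k \<le> N \<Longrightarrow>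
       dap i \<theta> k = mat_pd i Tb \<theta> *\<^sub>v af \<theta> (k-1) + Tb \<theta> *\<^sub>v daf i \<theta> (k-1)
         + mat_pd i Bb \<theta> *\<^sub>v x (k-1) + (mat_pd i S \<theta> * minv (H \<theta>)) *\<^sub>v y (k-1)
         - (S \<theta> * minv (H \<theta>) * mat_pd i H \<theta> * minv (H \<theta>)) *\<^sub>v y (k-1)"
  \<comment> \<open>Algorithm 1b (b), time update\<close>
    and B_time: "\<And>i \<theta> k. i \<in> Basis \<Longrightarrow> 1 \<le> k \<Longrightarrow> k \<le> N \<Longrightarrow>
       (let DA = dsum (DPf \<theta> (k-1)) (DQ \<theta>);
            dA = transpose_mat (hcat (mat_pd i Tb \<theta> * UPf \<theta> (k-1) + Tb \<theta> * dUPf i \<theta> (k-1))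
                                     (mat_pd i UQ \<theta>));
            dDA = dsum (dDPf i \<theta> (k-1)) (mat_pd i DQ \<theta>)
        in dUPp i \<theta> k = diffUD_R (Wt \<theta> k) (UPp \<theta> k) (DPp \<theta> k) DA dA dDA
         \<and> dDPp i \<theta> k = diffUD_D (Wt \<theta> k) (UPp \<theta> k) DA dA dDA)"
  \<comment> \<open>Algorithm 1b (b), measurement update\<close>
    and B_meas: "\<And>i \<theta> k. i \<in> Basis \<Longrightarrow> 1 \<le> k \<Longrightarrow> k \<le> N \<Longrightarrow>
       (let DA = dsum (DPp \<theta> k) (DH \<theta>);
            dA = transpose_mat (four_block_mat (dUPp i \<theta> k) (0\<^sub>m n m)
                    (mat_pd i Z \<theta> * UPp \<theta> k + Z \<theta> * dUPp i \<theta> k) (mat_pd i UH \<theta>));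
            dDA = dsum (dDPp i \<theta> k) (mat_pd i DH \<theta>);
            R = four_block_mat (UPf \<theta> k) (Ku \<theta> k) (0\<^sub>m m n) (URe \<theta> k);
            DR = dsum (DPf \<theta> k) (DRe \<theta> k);
            dR = diffUD_R (Wm \<theta> k) R DR DA dA dDA;
            dDR = diffUD_D (Wm \<theta> k) R DA dA dDA
        in dUPf i \<theta> k = blk dR 0 0 n n \<and> dKu i \<theta> k = blk dR 0 n n m
         \<and> dURe i \<theta> k = blk dR n n m m
         \<and> dDPf i \<theta> k = blk dDR 0 0 n n \<and> dDRe i \<theta> k = blk dDR n n m m)"
  \<comment> \<open>Algorithm 1b (c)\<close>
    and B_ebar: "\<And>i \<theta> k. i \<in> Basis \<Longrightarrow> 1 \<le> k \<Longrightarrow> k \<le> N \<Longrightarrow>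
       deb i \<theta> k = - ((minv (URe \<theta> k) * dURe i \<theta> k * minv (URe \<theta> k)) *\<^sub>v e \<theta> k)
         - minv (URe \<theta> k) *\<^sub>v (mat_pd i Z \<theta> *\<^sub>v ap \<theta> k + Z \<theta> *\<^sub>v dap i \<theta> k + mat_pd i \<beta> \<theta> *\<^sub>v x k)"
  \<comment> \<open>Algorithm 1b (d)\<close>
    and B_filt: "\<And>i \<theta> k. i \<in> Basis \<Longrightarrow> 1 \<le> k \<Longrightarrow> k \<le> N \<Longrightarrow>
       daf i \<theta> k = dap i \<theta> k + dKu i \<theta> k *\<^sub>v eb \<theta> k + Ku \<theta> k *\<^sub>v deb i \<theta> k"
  shows "\<forall>i\<in>Basis. \<forall>\<theta>. \<forall>k. 1 \<le> k \<and> k \<le> N \<longrightarrow>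
       dap i \<theta> k = vec_pd i (\<lambda>\<theta>. ap \<theta> k) \<theta>
     \<and> dUPp i \<theta> k = mat_pd i (\<lambda>\<theta>. UPp \<theta> k) \<theta>
     \<and> dDPp i \<theta> k = mat_pd i (\<lambda>\<theta>. DPp \<theta> k) \<theta>
     \<and> dUPf i \<theta> k = mat_pd i (\<lambda>\<theta>. UPf \<theta> k) \<theta>
     \<and> dDPf i \<theta> k = mat_pd i (\<lambda>\<theta>. DPf \<theta> k) \<theta>
     \<and> dURe i \<theta> k = mat_pd i (\<lambda>\<theta>. URe \<theta> k) \<theta>
     \<and> dDRe i \<theta> k = mat_pd i (\<lambda>\<theta>. DRe \<theta> k) \<theta>
     \<and> dKu i \<theta> k = mat_pd i (\<lambda>\<theta>. Ku \<theta> k) \<theta>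
     \<and> deb i \<theta> k = vec_pd i (\<lambda>\<theta>. eb \<theta> k) \<theta>
     \<and> daf i \<theta> k = vec_pd i (\<lambda>\<theta>. af \<theta> k) \<theta>"
proof (intro ballI allI impI)
  fix i :: 'a and \<theta> :: 'a and k :: nat
  assume iB: "i \<in> Basis" and kN: "1 \<le> k \<and> k \<le> N"
  define p where "p = (\<lambda>t::real. \<theta> + t *\<^sub>R i)"
  have p0: "p 0 = \<theta>" unfolding p_def by simp
  have MD: "\<And>nr nc F. mat_diff nr nc F \<Longrightarrow> mD nr nc (\<lambda>t. F (p t)) (mat_pd i F \<theta>)"
    unfolding p_def by (rule mat_diff_mD)
  have VD: "\<And>nr F. vec_diff nr F \<Longrightarrow> vD nr (\<lambda>t. F (p t)) (vec_pd i F \<theta>)"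
    unfolding p_def by (rule vec_diff_vD)
  have PD: "\<And>nr nc F G. mD nr nc (\<lambda>t. F (p t)) G \<Longrightarrow> mat_pd i F \<theta> = G"
    unfolding p_def by (rule mD_pd)
  have VPD: "\<And>nr F G. vD nr (\<lambda>t. F (p t)) G \<Longrightarrow> vec_pd i F \<theta> = G"
    unfolding p_def by (rule vD_pd)
  have MDpd: "\<And>nr nc F G. mD nr nc (\<lambda>t. F (p t)) G \<Longrightarrow> mD nr nc (\<lambda>t. F (p t)) (mat_pd i F \<theta>)"
    using PD by metis
  note md = model_diff fact_diff
  have MDd: "dim_row (F \<theta>) = nr \<and> dim_col (F \<theta>) = nc \<and> dim_row G = nr \<and> dim_col G = nc"
    if "mD nr nc (\<lambda>t. F (p t)) G" for nr nc F G
    using mD_dims(1,2)[OF that, of 0] mD_dims(3,4)[OF that] p0 by simp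
  have VDd: "dim_vec (F \<theta>) = nr \<and> dim_vec G = nr"
    if "vD nr (\<lambda>t. F (p t)) G" for nr F G
    using vD_dims(1)[OF that, of 0] vD_dims(2)[OF that] p0 by simp
  have cH: "\<And>\<theta>. H \<theta> \<in> carrier_mat m m" using md(7) unfolding mat_diff_def by blast
  have cS: "\<And>\<theta>. S \<theta> \<in> carrier_mat n m" using md(6) unfolding mat_diff_def by blast
  have cT: "\<And>\<theta>. T \<theta> \<in> carrier_mat n n" using md(1) unfolding mat_diff_def by blast
  have cB: "\<And>\<theta>. B \<theta> \<in> carrier_mat n r" using md(2) unfolding mat_diff_def by blast
  have cZ: "\<And>\<theta>. Z \<theta> \<in> carrier_mat m n" using md(3) unfolding mat_diff_def by blast
  have cbeta: "\<And>\<theta>. \<beta> \<theta> \<in> carrier_mat m r" using md(4) unfolding mat_diff_def by blast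
  have detH: "\<And>\<theta>. det (H \<theta>) \<noteq> 0" using pd_det[OF H_pd cH] by blast
  have mHi: "mD m m (\<lambda>t. minv (H (p t))) (- (minv (H \<theta>) * mat_pd i H \<theta> * minv (H \<theta>)))"
    using mD_minv[OF MD[OF md(7)]] detH p0 by simp
  have mSHi: "mD n m (\<lambda>t. S (p t) * minv (H (p t)))
     (mat_pd i S \<theta> * minv (H \<theta>) + S \<theta> * - (minv (H \<theta>) * mat_pd i H \<theta> * minv (H \<theta>)))"
    using mD_mult[OF MD[OF md(6)] mHi] p0 by simp
  have mTb: "mD n n (\<lambda>t. Tb (p t)) (mat_pd i Tb \<theta>)"
  proof (rule MDpd)
    show "mD n n (\<lambda>t. Tb (p t)) (mat_pd i T \<theta> - ((mat_pd i S \<theta> * minv (H \<theta>) + S \<theta> * - (minv (H \<theta>) * mat_pd i H \<theta> * minv (H \<theta>))) * Z \<theta> + S \<theta> * minv (H \<theta>) * mat_pd i Z \<theta>))"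
      unfolding Tb_def using mD_diff[OF MD[OF md(1)] mD_mult[OF mSHi MD[OF md(3)]]] p0 by simp
  qed
  have mBb: "mD n r (\<lambda>t. Bb (p t)) (mat_pd i Bb \<theta>)"
  proof (rule MDpd)
    show "mD n r (\<lambda>t. Bb (p t)) (mat_pd i B \<theta> - ((mat_pd i S \<theta> * minv (H \<theta>) + S \<theta> * - (minv (H \<theta>) * mat_pd i H \<theta> * minv (H \<theta>))) * \<beta> \<theta> + S \<theta> * minv (H \<theta>) * mat_pd i \<beta> \<theta>))"
      unfolding Bb_def using mD_diff[OF MD[OF md(2)] mD_mult[OF mSHi MD[OF md(4)]]] p0 by simp
  qed
  define I where "I = (\<lambda>k. mD n n (\<lambda>t. UPf (p t) k) (dUPf i \<theta> k) \<and> mD n n (\<lambda>t. DPf (p t) k) (dDPf i \<theta> k)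
      \<and> vD n (\<lambda>t. af (p t) k) (daf i \<theta> k))"
  define Q where "Q = (\<lambda>k. I k \<and> vD n (\<lambda>t. ap (p t) k) (dap i \<theta> k)
      \<and> mD n n (\<lambda>t. UPp (p t) k) (dUPp i \<theta> k) \<and> mD n n (\<lambda>t. DPp (p t) k) (dDPp i \<theta> k)
      \<and> mD m m (\<lambda>t. URe (p t) k) (dURe i \<theta> k) \<and> mD m m (\<lambda>t. DRe (p t) k) (dDRe i \<theta> k)
      \<and> mD n m (\<lambda>t. Ku (p t) k) (dKu i \<theta> k) \<and> vD m (\<lambda>t. eb (p t) k) (deb i \<theta> k))"
  have I0: "I 0"
  proof -
    have "mD n n (\<lambda>t. UPf (p t) 0) (dUPf i \<theta> 0)" using MD[OF md(10)] B_init[OF iB] A_init by simp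
    moreover have "mD n n (\<lambda>t. DPf (p t) 0) (dDPf i \<theta> 0)" using MD[OF md(11)] B_init[OF iB] A_init by simp
    moreover have "vD n (\<lambda>t. af (p t) 0) (daf i \<theta> 0)" using VD[OF md(9)] B_init[OF iB] A_init by simp
    ultimately show ?thesis unfolding I_def by blast
  qed
  have STEP: "Q k" if k1: "1 \<le> k" and kN: "k \<le> N" and IH: "I (k - 1)" for k
  proof -
    have jN: "k - 1 \<le> N" using kN by simp
    have IUPf: "mD n n (\<lambda>t. UPf (p t) (k-1)) (dUPf i \<theta> (k-1))"
      and IDPf: "mD n n (\<lambda>t. DPf (p t) (k-1)) (dDPf i \<theta> (k-1))"
      and Iaf: "vD n (\<lambda>t. af (p t) (k-1)) (daf i \<theta> (k-1))" using IH unfolding I_def by blast+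
    note ADk = A_diff[OF kN]
    have dUPp: "mat_diff n n (\<lambda>\<theta>. UPp \<theta> k)" and dDPp: "mat_diff n n (\<lambda>\<theta>. DPp \<theta> k)"
      and dUPf: "mat_diff n n (\<lambda>\<theta>. UPf \<theta> k)" and dDPf: "mat_diff n n (\<lambda>\<theta>. DPf \<theta> k)"
      and dURe: "mat_diff m m (\<lambda>\<theta>. URe \<theta> k)" and dDRe: "mat_diff m m (\<lambda>\<theta>. DRe \<theta> k)"
      and dKu: "mat_diff n m (\<lambda>\<theta>. Ku \<theta> k)"
      using ADk by blast+
    have mUPp: "mD n n (\<lambda>t. UPp (p t) k) (mat_pd i (\<lambda>\<theta>. UPp \<theta> k) \<theta>)" using MD[OF dUPp] by simp
    have mDPp: "mD n n (\<lambda>t. DPp (p t) k) (mat_pd i (\<lambda>\<theta>. DPp \<theta> k) \<theta>)" using MD[OF dDPp] by simp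
    have mUPf: "mD n n (\<lambda>t. UPf (p t) k) (mat_pd i (\<lambda>\<theta>. UPf \<theta> k) \<theta>)" using MD[OF dUPf] by simp
    have mDPf: "mD n n (\<lambda>t. DPf (p t) k) (mat_pd i (\<lambda>\<theta>. DPf \<theta> k) \<theta>)" using MD[OF dDPf] by simp
    have mURe: "mD m m (\<lambda>t. URe (p t) k) (mat_pd i (\<lambda>\<theta>. URe \<theta> k) \<theta>)" using MD[OF dURe] by simp
    have mDRe: "mD m m (\<lambda>t. DRe (p t) k) (mat_pd i (\<lambda>\<theta>. DRe \<theta> k) \<theta>)" using MD[OF dDRe] by simp
    have mKu: "mD n m (\<lambda>t. Ku (p t) k) (mat_pd i (\<lambda>\<theta>. Ku \<theta> k) \<theta>)" using MD[OF dKu] by simp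
    have ape: "(\<lambda>t. ap (p t) k) = (\<lambda>t. Tb (p t) *\<^sub>v af (p t) (k-1) + Bb (p t) *\<^sub>v x (k-1)
        + (S (p t) * minv (H (p t))) *\<^sub>v y (k-1))"
      by (intro ext A_pred[OF k1 kN])
    have vap0: "vD n (\<lambda>t. ap (p t) k) ((mat_pd i Tb \<theta> *\<^sub>v af \<theta> (k-1) + Tb \<theta> *\<^sub>v daf i \<theta> (k-1))
       + (mat_pd i Bb \<theta> *\<^sub>v x (k-1) + Bb \<theta> *\<^sub>v 0\<^sub>v r)
       + ((mat_pd i S \<theta> * minv (H \<theta>) + S \<theta> * - (minv (H \<theta>) * mat_pd i H \<theta> * minv (H \<theta>))) *\<^sub>v y (k-1)
          + (S \<theta> * minv (H \<theta>)) *\<^sub>v 0\<^sub>v m))"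
      unfolding ape
      using vD_add[OF vD_add[OF mD_mult_vec[OF mTb Iaf] mD_mult_vec[OF mBb vD_const[OF data(1)]]]
         mD_mult_vec[OF mSHi vD_const[OF data(2)]]] p0 by simp
    have D1: "dim_row (Tb \<theta>) = n" "dim_col (Tb \<theta>) = n" "dim_row (mat_pd i Tb \<theta>) = n" "dim_col (mat_pd i Tb \<theta>) = n"
      "dim_row (Bb \<theta>) = n" "dim_col (Bb \<theta>) = r" "dim_row (mat_pd i Bb \<theta>) = n" "dim_col (mat_pd i Bb \<theta>) = r"
      using MDd[OF mTb] MDd[OF mBb] by auto
    have D2: "dim_row (S \<theta>) = n" "dim_col (S \<theta>) = m" "dim_row (mat_pd i S \<theta>) = n" "dim_col (mat_pd i S \<theta>) = m"
      "dim_row (H \<theta>) = m" "dim_col (H \<theta>) = m" "dim_row (mat_pd i H \<theta>) = m" "dim_col (mat_pd i H \<theta>) = m"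
      "dim_row (minv (H \<theta>)) = m" "dim_col (minv (H \<theta>)) = m"
      "dim_row (Z \<theta>) = m" "dim_col (Z \<theta>) = n" "dim_row (mat_pd i Z \<theta>) = m" "dim_col (mat_pd i Z \<theta>) = n"
      "dim_row (\<beta> \<theta>) = m" "dim_col (\<beta> \<theta>) = r" "dim_row (mat_pd i \<beta> \<theta>) = m" "dim_col (mat_pd i \<beta> \<theta>) = r"
      using MDd[OF MD[OF md(6)]] MDd[OF MD[OF md(7)]] MDd[OF MD[OF md(3)]]
        MDd[OF MD[OF md(4)]] minv_carrier[OF cH[of \<theta>]] by auto
    have D3: "dim_vec (af \<theta> (k-1)) = n" "dim_vec (daf i \<theta> (k-1)) = n" "dim_vec (x j) = r" "dim_vec (y j) = m" for j
      using VDd[OF Iaf] data[of j] by auto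
    have eqa: "dap i \<theta> k = (mat_pd i Tb \<theta> *\<^sub>v af \<theta> (k-1) + Tb \<theta> *\<^sub>v daf i \<theta> (k-1))
       + (mat_pd i Bb \<theta> *\<^sub>v x (k-1) + Bb \<theta> *\<^sub>v 0\<^sub>v r)
       + ((mat_pd i S \<theta> * minv (H \<theta>) + S \<theta> * - (minv (H \<theta>) * mat_pd i H \<theta> * minv (H \<theta>))) *\<^sub>v y (k-1)
          + (S \<theta> * minv (H \<theta>)) *\<^sub>v 0\<^sub>v m)"
      unfolding B_pred[where \<theta>=\<theta>, OF iB k1 kN]
      by (rule eq_vecI) (simp_all add: D1 D2 D3 vec_simps mat_simps)
    have vap: "vD n (\<lambda>t. ap (p t) k) (dap i \<theta> k)"
      using vap0 eqa by simp
    have mwT: "\<And>t. mwgs (transpose_mat (hcat (Tb (p t) * UPf (p t) (k-1)) (UQ (p t))))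
        (dsum (DPf (p t) (k-1)) (DQ (p t))) (Wt (p t) k) (UPp (p t) k) (DPp (p t) k)"
      by (rule A_time[OF k1 kN])
    have mA: "mD (n+n) n (\<lambda>t. transpose_mat (hcat (Tb (p t) * UPf (p t) (k-1)) (UQ (p t))))
       (transpose_mat (hcat (mat_pd i Tb \<theta> * UPf \<theta> (k-1) + Tb \<theta> * dUPf i \<theta> (k-1)) (mat_pd i UQ \<theta>)))"
      using mD_transpose[OF mD_hcat[OF mD_mult[OF mTb IUPf] MD[OF md(14)]]] p0 by simp
    have mDA: "mD (n+n) (n+n) (\<lambda>t. dsum (DPf (p t) (k-1)) (DQ (p t))) (dsum (dDPf i \<theta> (k-1)) (mat_pd i DQ \<theta>))"
      using mD_dsum[OF IDPf MD[OF md(15)]] p0 by simp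
    have r1: "mat_pd i (\<lambda>\<theta>. UPp \<theta> k) \<theta> = dUPp i \<theta> k \<and> mat_pd i (\<lambda>\<theta>. DPp \<theta> k) \<theta> = dDPp i \<theta> k"
      using diffUD_correct[OF mwT mA mDA mUPp mDPp] B_time[OF iB k1 kN] p0 by (simp add: Let_def)
    have mUPp': "mD n n (\<lambda>t. UPp (p t) k) (dUPp i \<theta> k)" using mUPp r1 by simp
    have mDPp': "mD n n (\<lambda>t. DPp (p t) k) (dDPp i \<theta> k)" using mDPp r1 by simp
    have mwM: "\<And>t. mwgs (transpose_mat (four_block_mat (UPp (p t) k) (0\<^sub>m n m) (Z (p t) * UPp (p t) k) (UH (p t))))
            (dsum (DPp (p t) k) (DH (p t)))
            (Wm (p t) k) (four_block_mat (UPf (p t) k) (Ku (p t) k) (0\<^sub>m m n) (URe (p t) k))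
            (dsum (DPf (p t) k) (DRe (p t) k))"
      by (rule A_meas[OF k1 kN])
    have mA2: "mD (n+m) (n+m) (\<lambda>t. transpose_mat (four_block_mat (UPp (p t) k) (0\<^sub>m n m) (Z (p t) * UPp (p t) k) (UH (p t))))
      (transpose_mat (four_block_mat (dUPp i \<theta> k) (0\<^sub>m n m)
                    (mat_pd i Z \<theta> * UPp \<theta> k + Z \<theta> * dUPp i \<theta> k) (mat_pd i UH \<theta>)))"
      using mD_transpose[OF mD_four_block[OF mUPp' mD_const[OF zero_carrier_mat] mD_mult[OF MD[OF md(3)] mUPp'] MD[OF md(12)]]] p0
      by simp
    have mDA2: "mD (n+m) (n+m) (\<lambda>t. dsum (DPp (p t) k) (DH (p t))) (dsum (dDPp i \<theta> k) (mat_pd i DH \<theta>))"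
      using mD_dsum[OF mDPp' MD[OF md(13)]] p0 by simp
    have mR2: "mD (n+m) (n+m) (\<lambda>t. four_block_mat (UPf (p t) k) (Ku (p t) k) (0\<^sub>m m n) (URe (p t) k))
       (four_block_mat (mat_pd i (\<lambda>\<theta>. UPf \<theta> k) \<theta>) (mat_pd i (\<lambda>\<theta>. Ku \<theta> k) \<theta>) (0\<^sub>m m n) (mat_pd i (\<lambda>\<theta>. URe \<theta> k) \<theta>))"
      using mD_four_block[OF mUPf mKu mD_const[OF zero_carrier_mat] mURe] by simp
    have mDR2: "mD (n+m) (n+m) (\<lambda>t. dsum (DPf (p t) k) (DRe (p t) k))
       (dsum (mat_pd i (\<lambda>\<theta>. DPf \<theta> k) \<theta>) (mat_pd i (\<lambda>\<theta>. DRe \<theta> k) \<theta>))"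
      using mD_dsum[OF mDPf mDRe] by simp
    have r2: "four_block_mat (mat_pd i (\<lambda>\<theta>. UPf \<theta> k) \<theta>) (mat_pd i (\<lambda>\<theta>. Ku \<theta> k) \<theta>) (0\<^sub>m m n) (mat_pd i (\<lambda>\<theta>. URe \<theta> k) \<theta>)
        = diffUD_R (Wm \<theta> k) (four_block_mat (UPf \<theta> k) (Ku \<theta> k) (0\<^sub>m m n) (URe \<theta> k)) (dsum (DPf \<theta> k) (DRe \<theta> k))
            (dsum (DPp \<theta> k) (DH \<theta>))
            (transpose_mat (four_block_mat (dUPp i \<theta> k) (0\<^sub>m n m)
                    (mat_pd i Z \<theta> * UPp \<theta> k + Z \<theta> * dUPp i \<theta> k) (mat_pd i UH \<theta>)))
            (dsum (dDPp i \<theta> k) (mat_pd i DH \<theta>))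
      \<and> dsum (mat_pd i (\<lambda>\<theta>. DPf \<theta> k) \<theta>) (mat_pd i (\<lambda>\<theta>. DRe \<theta> k) \<theta>)
        = diffUD_D (Wm \<theta> k) (four_block_mat (UPf \<theta> k) (Ku \<theta> k) (0\<^sub>m m n) (URe \<theta> k))
            (dsum (DPp \<theta> k) (DH \<theta>))
            (transpose_mat (four_block_mat (dUPp i \<theta> k) (0\<^sub>m n m)
                    (mat_pd i Z \<theta> * UPp \<theta> k + Z \<theta> * dUPp i \<theta> k) (mat_pd i UH \<theta>)))
            (dsum (dDPp i \<theta> k) (mat_pd i DH \<theta>))"
      using diffUD_correct[OF mwM mA2 mDA2 mR2 mDR2] p0 by simp
    note r2s = r2[THEN conjunct1, symmetric] r2[THEN conjunct2, symmetric]
    have bm: "dUPf i \<theta> k = blk (four_block_mat (mat_pd i (\<lambda>\<theta>. UPf \<theta> k) \<theta>) (mat_pd i (\<lambda>\<theta>. Ku \<theta> k) \<theta>) (0\<^sub>m m n) (mat_pd i (\<lambda>\<theta>. URe \<theta> k) \<theta>)) 0 0 n n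
      \<and> dKu i \<theta> k = blk (four_block_mat (mat_pd i (\<lambda>\<theta>. UPf \<theta> k) \<theta>) (mat_pd i (\<lambda>\<theta>. Ku \<theta> k) \<theta>) (0\<^sub>m m n) (mat_pd i (\<lambda>\<theta>. URe \<theta> k) \<theta>)) 0 n n m
      \<and> dURe i \<theta> k = blk (four_block_mat (mat_pd i (\<lambda>\<theta>. UPf \<theta> k) \<theta>) (mat_pd i (\<lambda>\<theta>. Ku \<theta> k) \<theta>) (0\<^sub>m m n) (mat_pd i (\<lambda>\<theta>. URe \<theta> k) \<theta>)) n n m m
      \<and> dDPf i \<theta> k = blk (dsum (mat_pd i (\<lambda>\<theta>. DPf \<theta> k) \<theta>) (mat_pd i (\<lambda>\<theta>. DRe \<theta> k) \<theta>)) 0 0 n n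
      \<and> dDRe i \<theta> k = blk (dsum (mat_pd i (\<lambda>\<theta>. DPf \<theta> k) \<theta>) (mat_pd i (\<lambda>\<theta>. DRe \<theta> k) \<theta>)) n n m m"
      using B_meas[where \<theta>=\<theta>, OF iB k1 kN] unfolding Let_def r2s .
    have cpd: "mat_pd i (\<lambda>\<theta>. UPf \<theta> k) \<theta> \<in> carrier_mat n n" "mat_pd i (\<lambda>\<theta>. Ku \<theta> k) \<theta> \<in> carrier_mat n m"
      "mat_pd i (\<lambda>\<theta>. URe \<theta> k) \<theta> \<in> carrier_mat m m" "mat_pd i (\<lambda>\<theta>. DPf \<theta> k) \<theta> \<in> carrier_mat n n"
      "mat_pd i (\<lambda>\<theta>. DRe \<theta> k) \<theta> \<in> carrier_mat m m"
      using mUPf mKu mURe mDPf mDRe by (simp_all add: mD_carrier)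
    have r3: "dUPf i \<theta> k = mat_pd i (\<lambda>\<theta>. UPf \<theta> k) \<theta>" "dKu i \<theta> k = mat_pd i (\<lambda>\<theta>. Ku \<theta> k) \<theta>"
      "dURe i \<theta> k = mat_pd i (\<lambda>\<theta>. URe \<theta> k) \<theta>" "dDPf i \<theta> k = mat_pd i (\<lambda>\<theta>. DPf \<theta> k) \<theta>"
      "dDRe i \<theta> k = mat_pd i (\<lambda>\<theta>. DRe \<theta> k) \<theta>"
      using bm blk_four_block[OF cpd(1,2) zero_carrier_mat cpd(3)] blk_dsum[OF cpd(4,5)] by simp_all
    have mUPf': "mD n n (\<lambda>t. UPf (p t) k) (dUPf i \<theta> k)" using mUPf r3 by simp
    have mDPf': "mD n n (\<lambda>t. DPf (p t) k) (dDPf i \<theta> k)" using mDPf r3 by simp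
    have mURe': "mD m m (\<lambda>t. URe (p t) k) (dURe i \<theta> k)" using mURe r3 by simp
    have mDRe': "mD m m (\<lambda>t. DRe (p t) k) (dDRe i \<theta> k)" using mDRe r3 by simp
    have mKu': "mD n m (\<lambda>t. Ku (p t) k) (dKu i \<theta> k)" using mKu r3 by simp
    have detU: "\<forall>t. det (URe (p t) k) \<noteq> 0"
    proof
      fix t
      have u: "unit_upper_triangular (four_block_mat (UPf (p t) k) (Ku (p t) k) (0\<^sub>m m n) (URe (p t) k))"
        using mwM[of t] unfolding mwgs_def Let_def by simp
      have c: "UPf (p t) k \<in> carrier_mat n n" "Ku (p t) k \<in> carrier_mat n m" "URe (p t) k \<in> carrier_mat m m"
        using A_dims[OF kN] by auto
      show "det (URe (p t) k) \<noteq> 0" using uut_det[OF uut_four_block[OF u c] c(3)] .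
    qed
    have mUi: "mD m m (\<lambda>t. minv (URe (p t) k)) (- (minv (URe \<theta> k) * dURe i \<theta> k * minv (URe \<theta> k)))"
      using mD_minv[OF mURe' detU] p0 by simp
    have ee: "(\<lambda>t. e (p t) k) = (\<lambda>t. y k - Z (p t) *\<^sub>v ap (p t) k - \<beta> (p t) *\<^sub>v x k)"
      by (intro ext A_innov[OF k1 kN])
    have ve: "vD m (\<lambda>t. e (p t) k) ((0\<^sub>v m - (mat_pd i Z \<theta> *\<^sub>v ap \<theta> k + Z \<theta> *\<^sub>v dap i \<theta> k))
        - (mat_pd i \<beta> \<theta> *\<^sub>v x k + \<beta> \<theta> *\<^sub>v 0\<^sub>v r))"
      unfolding ee using vD_diff[OF vD_diff[OF vD_const[OF data(2)] mD_mult_vec[OF MD[OF md(3)] vap]]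
         mD_mult_vec[OF MD[OF md(4)] vD_const[OF data(1)]]] p0 by simp
    have ebe: "(\<lambda>t. eb (p t) k) = (\<lambda>t. minv (URe (p t) k) *\<^sub>v e (p t) k)"
      by (intro ext A_ebar[OF k1 kN])
    have veb0: "vD m (\<lambda>t. eb (p t) k) ((- (minv (URe \<theta> k) * dURe i \<theta> k * minv (URe \<theta> k))) *\<^sub>v e \<theta> k
        + minv (URe \<theta> k) *\<^sub>v ((0\<^sub>v m - (mat_pd i Z \<theta> *\<^sub>v ap \<theta> k + Z \<theta> *\<^sub>v dap i \<theta> k))
        - (mat_pd i \<beta> \<theta> *\<^sub>v x k + \<beta> \<theta> *\<^sub>v 0\<^sub>v r)))"
      unfolding ebe using mD_mult_vec[OF mUi ve] p0 by simp
    have D4: "dim_row (URe \<theta> k) = m" "dim_col (URe \<theta> k) = m" "dim_row (dURe i \<theta> k) = m" "dim_col (dURe i \<theta> k) = m"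
      "dim_row (minv (URe \<theta> k)) = m" "dim_col (minv (URe \<theta> k)) = m"
      "dim_vec (e \<theta> k) = m" "dim_vec (ap \<theta> k) = n" "dim_vec (dap i \<theta> k) = n"
      using MDd[OF mURe'] minv_carrier[of "URe \<theta> k" m] VDd[OF ve] VDd[OF vap] by auto
    have eqb: "deb i \<theta> k = (- (minv (URe \<theta> k) * dURe i \<theta> k * minv (URe \<theta> k))) *\<^sub>v e \<theta> k
        + minv (URe \<theta> k) *\<^sub>v ((0\<^sub>v m - (mat_pd i Z \<theta> *\<^sub>v ap \<theta> k + Z \<theta> *\<^sub>v dap i \<theta> k))
        - (mat_pd i \<beta> \<theta> *\<^sub>v x k + \<beta> \<theta> *\<^sub>v 0\<^sub>v r))"
      unfolding B_ebar[where \<theta>=\<theta>, OF iB k1 kN]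
      by (rule eq_vecI) (simp_all add: D2 D3 D4 vec_simps mat_simps mult_minus_vec' add_zero_vec' zero_minus_vec' mult_uminus_vec')
    have veb: "vD m (\<lambda>t. eb (p t) k) (deb i \<theta> k)"
      using veb0 eqb by simp
    have afe: "(\<lambda>t. af (p t) k) = (\<lambda>t. ap (p t) k + Ku (p t) k *\<^sub>v eb (p t) k)"
      by (intro ext A_filt[OF k1 kN])
    have vaf0: "vD n (\<lambda>t. af (p t) k) (dap i \<theta> k + (dKu i \<theta> k *\<^sub>v eb \<theta> k + Ku \<theta> k *\<^sub>v deb i \<theta> k))"
      unfolding afe using vD_add[OF vap mD_mult_vec[OF mKu' veb]] p0 by simp
    have D5: "dim_row (Ku \<theta> k) = n" "dim_col (Ku \<theta> k) = m" "dim_row (dKu i \<theta> k) = n" "dim_col (dKu i \<theta> k) = m"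
      "dim_vec (eb \<theta> k) = m" "dim_vec (deb i \<theta> k) = m"
      using MDd[OF mKu'] VDd[OF veb] by auto
    have eqc: "daf i \<theta> k = dap i \<theta> k + (dKu i \<theta> k *\<^sub>v eb \<theta> k + Ku \<theta> k *\<^sub>v deb i \<theta> k)"
      unfolding B_filt[where \<theta>=\<theta>, OF iB k1 kN]
      by (rule eq_vecI) (simp_all add: D4 D5)
    have vaf: "vD n (\<lambda>t. af (p t) k) (daf i \<theta> k)"
      using vaf0 eqc by simp
    show "Q k" unfolding Q_def I_def
      using mUPf' mDPf' vaf vap mUPp' mDPp' mURe' mDRe' mKu' veb by blast
  qed
  have Iall: "k \<le> N \<Longrightarrow> I k" for k
  proof (induction k)
    case 0 show ?case by (rule I0)
  next
    case (Suc j)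
    then have "I j" by simp
    then have "Q (Suc j)" using STEP[of "Suc j"] Suc.prems by simp
    then show ?case unfolding Q_def by blast
  qed
  have Ikm: "I (k - 1)" using Iall[of "k - 1"] kN by linarith
  have Qk: "Q k" using STEP[of k] kN Ikm by blast
  then have q: "mD n n (\<lambda>t. UPf (p t) k) (dUPf i \<theta> k)" "mD n n (\<lambda>t. DPf (p t) k) (dDPf i \<theta> k)"
      "vD n (\<lambda>t. af (p t) k) (daf i \<theta> k)" "vD n (\<lambda>t. ap (p t) k) (dap i \<theta> k)"
      "mD n n (\<lambda>t. UPp (p t) k) (dUPp i \<theta> k)" "mD n n (\<lambda>t. DPp (p t) k) (dDPp i \<theta> k)"
      "mD m m (\<lambda>t. URe (p t) k) (dURe i \<theta> k)" "mD m m (\<lambda>t. DRe (p t) k) (dDRe i \<theta> k)"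
      "mD n m (\<lambda>t. Ku (p t) k) (dKu i \<theta> k)" "vD m (\<lambda>t. eb (p t) k) (deb i \<theta> k)"
    unfolding Q_def I_def by blast+
  show "dap i \<theta> k = vec_pd i (\<lambda>\<theta>. ap \<theta> k) \<theta>
     \<and> dUPp i \<theta> k = mat_pd i (\<lambda>\<theta>. UPp \<theta> k) \<theta>
     \<and> dDPp i \<theta> k = mat_pd i (\<lambda>\<theta>. DPp \<theta> k) \<theta>
     \<and> dUPf i \<theta> k = mat_pd i (\<lambda>\<theta>. UPf \<theta> k) \<theta>
     \<and> dDPf i \<theta> k = mat_pd i (\<lambda>\<theta>. DPf \<theta> k) \<theta>
     \<and> dURe i \<theta> k = mat_pd i (\<lambda>\<theta>. URe \<theta> k) \<theta>
     \<and> dDRe i \<theta> k = mat_pd i (\<lambda>\<theta>. DRe \<theta> k) \<theta>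
     \<and> dKu i \<theta> k = mat_pd i (\<lambda>\<theta>. Ku \<theta> k) \<theta>
     \<and> deb i \<theta> k = vec_pd i (\<lambda>\<theta>. eb \<theta> k) \<theta>
     \<and> daf i \<theta> k = vec_pd i (\<lambda>\<theta>. af \<theta> k) \<theta>"
    using VPD[OF q(4)] PD[OF q(5)] PD[OF q(6)] PD[OF q(1)] PD[OF q(2)] PD[OF q(7)] PD[OF q(8)]
      PD[OF q(9)] VPD[OF q(10)] VPD[OF q(3)] by simp
qed

end
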